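(* Let $p>800$ be a prime and let $A\subseteq\mathbb{Z}_p^2$ with $|A|=p+\mathrm{Ol}(\mathbb{Z}_p)$. For each subgroup $U\le\mathbb{Z}_p^2$ with $U\cong\mathbb{Z}_p$, fix a complementary subgroup $V$ (so $\mathbb{Z}_p^2=U\oplus V$) and an isomorphism $\mathbb{Z}_p\cong V$, and for $j\in\mathbb{Z}_p$ set $\lambda_j=\lambda_j^U=|A\cap(j+U)|$, where $j$ is viewed as an element of $V$. Suppose that one of the following two conditions holds: (1) There exists a subgroup $U\cong\mathbb{Z}_p$ such that, with $J=\{j\in\mathbb{Z}_p:\lambda_j \text{ odd}\}$, there is a set $I\subseteq\mathbb{Z}_p$ with $\lambda_i\geq 1$ for all $i\in I$, $\Sigma(I\cup J)=\mathbb{Z}_p$, and $\sum_{i\in\mathbb{Z}_p}\lfloor\lambda_i^*/2\rfloor\lceil\lambda_i^*/2\rceil\geq p-1$, where $\lambda_i^*=\lambda_i-1$ if $i\in I$ and $\lambda_i^*=\lambda_i$ otherwise. (2) For all subgroups $U\cong\mathbb{Z}_p$ and all choices of isomorphism $\mathbb{Z}_p\cong V$ we have \[ \prod_{j=0}^{p-1}\left|\cos\frac{j\pi}{p}\right|^{\lambda_j}\leq\frac{1}{p^2} \] (here $j$ is identified with its representative in $\{0,\dots,p-1\}$). Then $A$ contains a non-empty subset whose sum is $0$.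
   Context: For a set $S$ in an abelian group, $\Sigma(S)$ denotes the set of all sums of subsets of $S$ (including the empty sum $0$). $\mathrm{Ol}(\mathbb{Z}_p)$ denotes the smallest integer $k$ such that every set of $k$ distinct elements of $\mathbb{Z}_p$ contains a non-empty subset with sum $0$. *)

theory Defs
  imports Complex_Main "HOL-Computational_Algebra.Primes"
begin

text \<open>Z_p is represented by the residues {0..<p} (as integers), Z_p^2 by pairs of residues;
  the group operation is componentwise addition modulo p.\<close>

definition Zp :: "nat \<Rightarrow> int set" where
  "Zp p = {0..<int p}"

definition Zp2 :: "nat \<Rightarrow> (int \<times> int) set" where
  "Zp2 p = Zp p \<times> Zp p"

definition subset_sums :: "nat \<Rightarrow> int set \<Rightarrow> int set" where
  "subset_sums p S = {(\<Sum>B) mod int p | B. B \<subseteq> S}"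

definition Ol :: "nat \<Rightarrow> nat" where
  "Ol p = (LEAST k. \<forall>S. S \<subseteq> Zp p \<and> card S = k \<longrightarrow>
              (\<exists>B. B \<subseteq> S \<and> B \<noteq> {} \<and> (\<Sum>B) mod int p = 0))"

text \<open>A pair (u,v) describes U = <u> (a subgroup isomorphic to Z_p), a complement V = <v>,
  and the isomorphism Z_p -> V, j |-> j v. They form a valid choice iff u, v are
  linearly independent over Z_p.\<close>
definition valid_frame :: "nat \<Rightarrow> int \<times> int \<Rightarrow> int \<times> int \<Rightarrow> bool" where
  "valid_frame p u v \<longleftrightarrow> u \<in> Zp2 p \<and> v \<in> Zp2 p \<and>
     (fst u * snd v - snd u * fst v) mod int p \<noteq> 0"

definition lam :: "nat \<Rightarrow> (int \<times> int) set \<Rightarrow> int \<times> int \<Rightarrow> int \<times> int \<Rightarrow> int \<Rightarrow> nat" where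
  "lam p A u v j = card {a \<in> A. \<exists>t \<in> Zp p.
      a = ((j * fst v + t * fst u) mod int p, (j * snd v + t * snd u) mod int p)}"

end

theory Submission
  imports Defs "HOL-Computational_Algebra.Polynomial" "HOL-Library.FuncSet"
begin


definition lw :: "real set \<Rightarrow> real \<Rightarrow> real" where
  "lw S y = 1 / (\<Prod>b\<in>S-{y}. (y - b))"

lemma poly_prod_lin: "poly (\<Prod>b\<in>T. [:-b,1::real:]) z = (\<Prod>b\<in>T. z - b)"
  unfolding poly_prod by (rule prod.cong) (simp_all add: algebra_simps)

lemma degree_prod_lin: "finite T \<Longrightarrow> degree (\<Prod>b\<in>T. [:-b,1::real:]) = card T"
  by (subst degree_prod_sum_eq) auto

lemma lead_prod_lin: "finite T \<Longrightarrow> coeff (\<Prod>b\<in>T. [:-b,1::real:]) (card T) = 1"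
proof -
  assume "finite T"
  hence "coeff (\<Prod>b\<in>T. [:-b,1::real:]) (card T) = lead_coeff (\<Prod>b\<in>T. [:-b,1::real:])"
    using degree_prod_lin by simp
  also have "\<dots> = 1" by (simp add: lead_coeff_prod)
  finally show ?thesis .
qed

lemma lagrange_coeff:
  fixes q :: "real poly"
  assumes S: "finite S" "card S = Suc n" and dq: "degree q \<le> n"
  shows "coeff q n = (\<Sum>y\<in>S. poly q y * lw S y)"
proof -
  define Lp where "Lp = (\<Sum>y\<in>S. smult (poly q y * lw S y) (\<Prod>b\<in>S-{y}. [:-b,1:]))"
  have cardm: "y \<in> S \<Longrightarrow> card (S - {y}) = n" for y using S by simp
  have dLp: "degree Lp \<le> n"
    unfolding Lp_def
    by (rule degree_sum_le) (use S cardm degree_prod_lin in \<open>auto intro: order.trans[OF degree_smult_le]\<close>)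
  have nz: "y \<in> S \<Longrightarrow> (\<Prod>b\<in>S-{y}. (y - b)) \<noteq> 0" for y
    using S by (subst prod_zero_iff) auto
  have ev: "poly Lp z = poly q z" if z: "z \<in> S" for z
  proof -
    have "poly Lp z = (\<Sum>y\<in>S. poly q y * lw S y * (\<Prod>b\<in>S-{y}. z - b))"
      unfolding Lp_def by (simp add: poly_sum poly_prod_lin)
    also have "\<dots> = (\<Sum>y\<in>{z}. poly q y * lw S y * (\<Prod>b\<in>S-{y}. z - b))"
    proof (rule sum.mono_neutral_right)
      show "\<forall>i\<in>S - {z}. poly q i * lw S i * (\<Prod>b\<in>S - {i}. z - b) = 0"
        using S z by (auto simp: prod_zero_iff)
    qed (use S z in auto)
    also have "\<dots> = poly q z" using nz[OF z] by (simp add: lw_def)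
    finally show ?thesis .
  qed
  have "q = Lp"
  proof (rule ccontr)
    assume ne: "q \<noteq> Lp"
    hence "q - Lp \<noteq> 0" by simp
    hence "card {x. poly (q - Lp) x = 0} \<le> degree (q - Lp)" by (rule card_poly_roots_bound)
    also have "\<dots> \<le> n" using dq dLp by (meson degree_diff_le)
    finally have c1: "card {x. poly (q - Lp) x = 0} \<le> n" .
    have "S \<subseteq> {x. poly (q - Lp) x = 0}" using ev by auto
    moreover have "finite {x. poly (q - Lp) x = 0}" using \<open>q - Lp \<noteq> 0\<close> poly_roots_finite by blast
    ultimately have "card S \<le> card {x. poly (q - Lp) x = 0}" by (rule card_mono[rotated])
    with c1 S show False by simp
  qed
  hence "coeff q n = coeff Lp n" by simp
  also have "\<dots> = (\<Sum>y\<in>S. poly q y * lw S y * coeff (\<Prod>b\<in>S-{y}. [:-b,1:]) n)"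
    unfolding Lp_def by (simp add: coeff_sum)
  also have "\<dots> = (\<Sum>y\<in>S. poly q y * lw S y)"
  proof (rule sum.cong)
    fix y assume "y \<in> S"
    hence "coeff (\<Prod>b\<in>S-{y}. [:-b,1:]) n = 1" using lead_prod_lin[of "S-{y}"] cardm S by auto
    thus "poly q y * lw S y * coeff (\<Prod>b\<in>S-{y}. [:-b,1:]) n = poly q y * lw S y" by simp
  qed simp
  finally show ?thesis .
qed

lemma lagrange_mono:
  assumes S: "finite S" "card S = Suc n" and k: "k \<le> n"
  shows "(\<Sum>y\<in>S. y ^ k * lw S y) = (if k = n then 1 else 0)"
proof -
  have "coeff (monom (1::real) k) n = (\<Sum>y\<in>S. poly (monom 1 k) y * lw S y)"
    by (rule lagrange_coeff[OF S]) (use k in \<open>simp add: degree_monom_eq\<close>)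
  thus ?thesis by (simp add: poly_monom coeff_monom)
qed


definition Dp :: "(nat \<Rightarrow> real) \<Rightarrow> nat set \<Rightarrow> real poly" where
  "Dp d K = (\<Prod>j\<in>K. [:-d j,1:])"

lemma coeff_lin_mult: "coeff ([:-a,1::real:] * P) k = (if k = 0 then 0 else coeff P (k - 1)) - a * coeff P k"
  by (cases k) (simp_all add: coeff_pCons algebra_simps)

lemma coeff_x_mult: "coeff ([:0,1::real:] * P) k = (if k = 0 then 0 else coeff P (k - 1))"
  by (cases k) (simp_all add: coeff_pCons)

lemma Dp_coeffs:
  assumes "finite K"
  shows "coeff (Dp d K) (card K) = 1 \<and> (\<forall>k>card K. coeff (Dp d K) k = 0) \<and>
         (\<forall>m. card K = Suc m \<longrightarrow> coeff (Dp d K) m = - (\<Sum>j\<in>K. d j)) \<and>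
         (\<forall>m. card K = Suc (Suc m) \<longrightarrow> coeff (Dp d K) m = ((\<Sum>j\<in>K. d j)^2 - (\<Sum>j\<in>K. (d j)^2)) / 2)"
  using assms
proof (induction K rule: finite_induct)
  case empty
  then show ?case by (simp add: Dp_def)
next
  case (insert a K)
  have DI: "Dp d (insert a K) = [:-d a,1:] * Dp d K" using insert by (simp add: Dp_def)
  note IH = insert.IH
  have c: "card (insert a K) = Suc (card K)" using insert by simp
  have s1: "(\<Sum>j\<in>insert a K. d j) = d a + (\<Sum>j\<in>K. d j)" using insert by simp
  have s2: "(\<Sum>j\<in>insert a K. (d j)^2) = (d a)^2 + (\<Sum>j\<in>K. (d j)^2)" using insert by simp
  show ?case
  proof (intro conjI allI impI)
    show "coeff (Dp d (insert a K)) (card (insert a K)) = 1"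
      using IH by (simp add: DI c coeff_lin_mult)
  next
    fix k assume "card (insert a K) < k"
    thus "coeff (Dp d (insert a K)) k = 0" unfolding DI coeff_lin_mult using IH c by auto
  next
    fix m assume m: "card (insert a K) = Suc m"
    hence "m = card K" using c by simp
    thus "coeff (Dp d (insert a K)) m = - (\<Sum>j\<in>insert a K. d j)"
    proof (cases "card K")
      case 0
      hence "K = {}" using insert.hyps(1) by simp
      thus ?thesis using \<open>m = card K\<close> 0 by (simp add: Dp_def)
    next
      case (Suc k)
      thus ?thesis using IH \<open>m = card K\<close> by (simp add: DI coeff_lin_mult s1 algebra_simps)
    qed
  next
    fix m assume m: "card (insert a K) = Suc (Suc m)"
    hence ck: "card K = Suc m" using c by simp
    show "coeff (Dp d (insert a K)) m = ((\<Sum>j\<in>insert a K. d j)^2 - (\<Sum>j\<in>insert a K. (d j)^2)) / 2"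
    proof (cases m)
      case 0
      with ck obtain b where Kb: "K = {b}" by (auto simp: card_Suc_eq)
      with insert.hyps have "a \<noteq> b" by auto
      then show ?thesis using IH ck 0 Kb
        by (simp add: DI coeff_lin_mult power2_eq_square algebra_simps Dp_def)
    next
      case (Suc m')
      then show ?thesis using IH ck insert.hyps
        by (simp add: DI coeff_lin_mult power2_eq_square algebra_simps)
    qed
  qed
qed

lemma poly_Dp: "poly (Dp d K) z = (\<Prod>j\<in>K. z - d j)"
  unfolding Dp_def poly_prod by (rule prod.cong) simp_all

lemma block_identity:
  fixes c :: "nat \<Rightarrow> real"
  assumes K: "finite K" and inj: "inj_on c K"
  shows "(\<Sum>i\<in>K. c i * (\<Prod>j\<in>K-{i}. c i - c j - 1) / (\<Prod>j\<in>K-{i}. c i - c j))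
         = (\<Sum>i\<in>K. c i) - real (card K) * (real (card K) - 1) / 2"
proof (cases "card K")
  case 0
  hence "K = {}" using K by simp
  thus ?thesis by simp
next
  case (Suc m)
  define n where "n = card K"
  define r where "r = Dp (\<lambda>j. c j + 1) K"
  define Q where "Q = Dp c K"
  define q3 where "q3 = [:0,1:] * r - [:- real n,1:] * Q"
  have cr: "coeff r (card K) = 1" "\<forall>k>card K. coeff r k = 0"
     "\<forall>m. card K = Suc m \<longrightarrow> coeff r m = - (\<Sum>j\<in>K. c j + 1)"
     "\<forall>m. card K = Suc (Suc m) \<longrightarrow> coeff r m = ((\<Sum>j\<in>K. c j + 1)^2 - (\<Sum>j\<in>K. (c j + 1)^2)) / 2"
    using Dp_coeffs[OF K, of "\<lambda>j. c j + 1"] unfolding r_def by auto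
  have cQ: "coeff Q (card K) = 1" "\<forall>k>card K. coeff Q k = 0"
     "\<forall>m. card K = Suc m \<longrightarrow> coeff Q m = - (\<Sum>j\<in>K. c j)"
     "\<forall>m. card K = Suc (Suc m) \<longrightarrow> coeff Q m = ((\<Sum>j\<in>K. c j)^2 - (\<Sum>j\<in>K. (c j)^2)) / 2"
    using Dp_coeffs[OF K, of c] unfolding Q_def by auto
  have s1: "(\<Sum>j\<in>K. c j + 1) = (\<Sum>j\<in>K. c j) + real n" by (simp add: sum.distrib n_def)
  have s2: "(\<Sum>j\<in>K. (c j + 1)^2) = (\<Sum>j\<in>K. (c j)^2) + 2 * (\<Sum>j\<in>K. c j) + real n"
    by (simp add: power2_eq_square algebra_simps sum.distrib sum_distrib_left sum_distrib_right n_def)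
  have cq: "coeff q3 k = (if k = 0 then 0 else coeff r (k - 1)) - ((if k = 0 then 0 else coeff Q (k - 1)) - real n * coeff Q k)" for k
    unfolding q3_def coeff_diff coeff_x_mult coeff_lin_mult by simp
  have "degree q3 \<le> m"
  proof (rule degree_le, intro allI impI)
    fix k assume "m < k"
    then consider "k = Suc m" | "k = Suc (Suc m)" | "k > Suc (Suc m)" by linarith
    thus "coeff q3 k = 0"
    proof cases
      case 1 thus ?thesis using cr cQ Suc by (simp add: cq s1 n_def)
    next
      case 2 thus ?thesis using cr cQ Suc by (simp add: cq n_def)
    next
      case 3 thus ?thesis using cr cQ Suc by (simp add: cq n_def)
    qed
  qed
  have Sc: "finite (c ` K)" "card (c ` K) = Suc m" using K inj Suc by (auto simp: card_image)
  have "coeff q3 m = (\<Sum>y\<in>c ` K. poly q3 y * lw (c ` K) y)"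
    by (rule lagrange_coeff[OF Sc \<open>degree q3 \<le> m\<close>])
  also have "\<dots> = (\<Sum>i\<in>K. poly q3 (c i) * lw (c ` K) (c i))"
    using inj by (simp add: sum.reindex)
  also have "\<dots> = (\<Sum>i\<in>K. - (c i * (\<Prod>j\<in>K-{i}. c i - c j - 1) / (\<Prod>j\<in>K-{i}. c i - c j)))"
  proof (rule sum.cong)
    fix i assume i: "i \<in> K"
    have p1: "(\<Prod>j\<in>K. c i - (c j + 1)) = - (\<Prod>j\<in>K-{i}. c i - c j - 1)"
      using i K by (subst prod.remove[of K i]) (auto simp: algebra_simps)
    have p2: "(\<Prod>j\<in>K. c i - c j) = 0" using i K by (auto simp: prod_zero_iff)
    have pq: "poly q3 (c i) = - (c i * (\<Prod>j\<in>K-{i}. c i - c j - 1))"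
      unfolding q3_def r_def Q_def by (simp add: poly_Dp p1 p2)
    have "c ` K - {c i} = c ` (K - {i})" using inj i by (auto simp: inj_on_def)
    hence lwe: "lw (c ` K) (c i) = 1 / (\<Prod>j\<in>K-{i}. c i - c j)"
      unfolding lw_def using inj i by (simp add: prod.reindex inj_on_diff)
    show "poly q3 (c i) * lw (c ` K) (c i) = - (c i * (\<Prod>j\<in>K-{i}. c i - c j - 1) / (\<Prod>j\<in>K-{i}. c i - c j))"
      by (simp add: pq lwe)
  qed simp
  finally have main: "coeff q3 m = - (\<Sum>i\<in>K. c i * (\<Prod>j\<in>K-{i}. c i - c j - 1) / (\<Prod>j\<in>K-{i}. c i - c j))"
    by (simp add: sum_negf)
  have "coeff q3 m = real n * (real n - 1) / 2 - (\<Sum>j\<in>K. c j)"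
  proof (cases m)
    case 0
    thus ?thesis using cQ Suc by (simp add: cq n_def)
  next
    case (Suc m')
    have "coeff q3 m = coeff r m' - (coeff Q m' - real n * coeff Q m)" using Suc by (simp add: cq)
    also have "\<dots> = real n * (real n - 1) / 2 - (\<Sum>j\<in>K. c j)"
      using cr cQ \<open>card K = Suc m\<close> Suc unfolding s1 s2 n_def
      by (simp add: power2_eq_square algebra_simps add_divide_distrib diff_divide_distrib)
    finally show ?thesis .
  qed
  thus ?thesis using main unfolding n_def by (smt (verit))
qed


definition mnm :: "nat \<Rightarrow> (nat \<Rightarrow> nat) \<Rightarrow> (nat \<Rightarrow> real) \<Rightarrow> real" where
  "mnm n e x = (\<Prod>i<n. x i ^ e i)"

definition deg :: "nat \<Rightarrow> (nat \<Rightarrow> nat) \<Rightarrow> nat" where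
  "deg n e = (\<Sum>i<n. e i)"

inductive ipoly :: "nat \<Rightarrow> nat \<Rightarrow> ((nat \<Rightarrow> real) \<Rightarrow> real) \<Rightarrow> bool" for n where
  pconst: "ipoly n d (\<lambda>x. a)"
| pvar: "i < n \<Longrightarrow> 1 \<le> d \<Longrightarrow> ipoly n d (\<lambda>x. x i)"
| padd: "ipoly n d g \<Longrightarrow> ipoly n d h \<Longrightarrow> ipoly n d (\<lambda>x. g x + h x)"
| pmult: "ipoly n d1 g \<Longrightarrow> ipoly n d2 h \<Longrightarrow> d1 + d2 \<le> d \<Longrightarrow> ipoly n d (\<lambda>x. g x * h x)"


definition rep :: "nat \<Rightarrow> nat \<Rightarrow> ((nat \<Rightarrow> real) \<Rightarrow> real) \<Rightarrow> (nat \<Rightarrow> nat) set \<Rightarrow> ((nat \<Rightarrow> nat) \<Rightarrow> real) \<Rightarrow> bool" where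
  "rep n d g E cf \<longleftrightarrow> finite E \<and> (\<forall>e\<in>E. deg n e \<le> d) \<and> (\<forall>x. g x = (\<Sum>e\<in>E. cf e * mnm n e x))"

lemma mnm_add: "mnm n (\<lambda>i. e i + f i) x = mnm n e x * mnm n f x"
  unfolding mnm_def by (simp add: power_add prod.distrib)

lemma deg_add: "deg n (\<lambda>i. e i + f i) = deg n e + deg n f"
  unfolding deg_def by (simp add: sum.distrib)

lemma rep_exists: "ipoly n d g \<Longrightarrow> \<exists>E cf. rep n d g E cf"
proof (induction rule: ipoly.induct)
  case (pconst d a)
  show ?case by (rule exI[of _ "{\<lambda>_. 0}"], rule exI[of _ "\<lambda>_. a"]) (simp add: rep_def mnm_def deg_def)
next
  case (pvar i d)
  show ?case
    by (rule exI[of _ "{\<lambda>j. if j = i then 1 else 0}"], rule exI[of _ "\<lambda>_. 1"])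
       (use pvar in \<open>simp add: rep_def mnm_def deg_def power_0 if_distrib prod.If_cases sum.If_cases\<close>)
next
  case (padd d g h)
  then obtain E1 c1 E2 c2 where r1: "rep n d g E1 c1" and r2: "rep n d h E2 c2" by blast
  define cf where "cf e = (if e \<in> E1 then c1 e else 0) + (if e \<in> E2 then c2 e else 0)" for e
  have "rep n d (\<lambda>x. g x + h x) (E1 \<union> E2) cf"
    unfolding rep_def
  proof (intro conjI allI)
    show "finite (E1 \<union> E2)" using r1 r2 by (simp add: rep_def)
    show "\<forall>e\<in>E1 \<union> E2. deg n e \<le> d" using r1 r2 by (auto simp: rep_def)
    fix x
    have f: "finite E1" "finite E2" using r1 r2 by (auto simp: rep_def)
    have a: "(\<Sum>e\<in>E1 \<union> E2. (if e \<in> E1 then c1 e else 0) * mnm n e x) = (\<Sum>e\<in>E1. c1 e * mnm n e x)"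
      by (rule sum.mono_neutral_cong_right) (use f in auto)
    have b: "(\<Sum>e\<in>E1 \<union> E2. (if e \<in> E2 then c2 e else 0) * mnm n e x) = (\<Sum>e\<in>E2. c2 e * mnm n e x)"
      by (rule sum.mono_neutral_cong_right) (use f in auto)
    show "g x + h x = (\<Sum>e\<in>E1 \<union> E2. cf e * mnm n e x)"
      using r1 r2 a b unfolding cf_def rep_def by (simp add: distrib_right sum.distrib)
  qed
  thus ?case by blast
next
  case (pmult d1 g d2 h d)
  then obtain E1 c1 E2 c2 where r1: "rep n d1 g E1 c1" and r2: "rep n d2 h E2 c2" by blast
  have f: "finite E1" "finite E2" using r1 r2 by (auto simp: rep_def)
  define pl where "pl = (\<lambda>(e::nat\<Rightarrow>nat, f::nat\<Rightarrow>nat). (\<lambda>i. e i + f i))"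
  define E where "E = pl ` (E1 \<times> E2)"
  define cf where "cf e = (\<Sum>q\<in>{q \<in> E1 \<times> E2. pl q = e}. c1 (fst q) * c2 (snd q))" for e
  have "rep n d (\<lambda>x. g x * h x) E cf"
    unfolding rep_def
  proof (intro conjI allI)
    show "finite E" unfolding E_def using f by simp
    show "\<forall>e\<in>E. deg n e \<le> d" using r1 r2 pmult.hyps(3) unfolding E_def rep_def pl_def
      by (fastforce simp: deg_add intro: order.trans[OF add_mono])
    fix x
    have "g x * h x = (\<Sum>e\<in>E1. c1 e * mnm n e x) * (\<Sum>e\<in>E2. c2 e * mnm n e x)"
      using r1 r2 by (simp add: rep_def)
    also have "\<dots> = (\<Sum>q\<in>E1 \<times> E2. c1 (fst q) * c2 (snd q) * mnm n (pl q) x)"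
      unfolding sum_product sum.cartesian_product pl_def
      by (rule sum.cong) (auto simp: mnm_add)
    also have "\<dots> = (\<Sum>e\<in>E. \<Sum>q\<in>{q \<in> E1 \<times> E2. pl q = e}. c1 (fst q) * c2 (snd q) * mnm n (pl q) x)"
      unfolding E_def by (rule sum.group[symmetric]) (use f in auto)
    also have "\<dots> = (\<Sum>e\<in>E. cf e * mnm n e x)"
      unfolding cf_def sum_distrib_right by (rule sum.cong) auto
    finally show "g x * h x = (\<Sum>e\<in>E. cf e * mnm n e x)" .
  qed
  thus ?case by blast
qed

lemma polys_mono: "ipoly n d g \<Longrightarrow> d \<le> d' \<Longrightarrow> ipoly n d' g"
  using pmult[of n d g 0 "\<lambda>x. 1" d'] pconst[of n 0 1] by simp

lemma polys_sum: "finite I \<Longrightarrow> (\<And>i. i \<in> I \<Longrightarrow> ipoly n d (f i)) \<Longrightarrow> ipoly n d (\<lambda>x. \<Sum>i\<in>I. f i x)"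
proof (induction I rule: finite_induct)
  case empty
  then show ?case using pconst[of n d 0] by simp
next
  case (insert a I)
  then show ?case using padd[of n d "f a" "\<lambda>x. \<Sum>i\<in>I. f i x"] by simp
qed

lemma polys_prod: "finite I \<Longrightarrow> (\<And>i. i \<in> I \<Longrightarrow> ipoly n 1 (f i)) \<Longrightarrow> ipoly n (card I) (\<lambda>x. \<Prod>i\<in>I. f i x)"
proof (induction I rule: finite_induct)
  case empty
  then show ?case using pconst[of n 0 1] by simp
next
  case (insert a I)
  then show ?case using pmult[of n 1 "f a" "card I" "\<lambda>x. \<Prod>i\<in>I. f i x" "card (insert a I)"] by simp
qed

lemma polys_power: "ipoly n d g \<Longrightarrow> ipoly n (d * m) (\<lambda>x. g x ^ m)"
proof (induction m)
  case 0
  then show ?case using pconst[of n 0 1] by simp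
next
  case (Suc m)
  then show ?case using pmult[of n d g "d * m" "\<lambda>x. g x ^ m" "d * Suc m"] by simp
qed

lemma polys_diff: "ipoly n d g \<Longrightarrow> ipoly n d h \<Longrightarrow> ipoly n d (\<lambda>x. g x - h x)"
proof -
  assume g: "ipoly n d g" and h: "ipoly n d h"
  have "ipoly n d (\<lambda>x. (-1) * h x)" using pmult[OF pconst[of n 0 "-1"] h, of d] by simp
  from padd[OF g this] show ?thesis by simp
qed


definition Lf :: "nat \<Rightarrow> (nat \<Rightarrow> real set) \<Rightarrow> ((nat \<Rightarrow> real) \<Rightarrow> real) \<Rightarrow> real" where
  "Lf n A g = (\<Sum>a\<in>PiE {..<n} A. g a * (\<Prod>i<n. lw (A i) (a i)))"

definition grid :: "nat \<Rightarrow> (nat \<Rightarrow> real set) \<Rightarrow> (nat \<Rightarrow> nat) \<Rightarrow> bool" where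
  "grid n A c \<longleftrightarrow> (\<forall>i<n. finite (A i) \<and> card (A i) = Suc (c i))"

lemma Lf_mnm:
  assumes "\<forall>i<n. finite (A i)"
  shows "Lf n A (mnm n e) = (\<Prod>i<n. \<Sum>y\<in>A i. y ^ e i * lw (A i) y)"
  unfolding Lf_def mnm_def
  by (subst prod_sum_PiE) (use assms in \<open>auto simp: prod.distrib\<close>)

lemma Lf_lin:
  "Lf n A (\<lambda>x. \<Sum>j\<in>J. a j * mnm n (ex j) x) = (\<Sum>j\<in>J. a j * Lf n A (mnm n (ex j)))"
  unfolding Lf_def sum_distrib_right sum_distrib_left
  by (subst sum.swap) (simp add: mult.assoc)

lemma Lf_mnm_val:
  assumes g: "grid n A c" and d: "deg n e \<le> deg n c"
  shows "Lf n A (mnm n e) = (if \<forall>i<n. e i = c i then 1 else 0)"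
proof -
  have fin: "\<forall>i<n. finite (A i)" using g by (simp add: grid_def)
  have fac: "i < n \<Longrightarrow> e i \<le> c i \<Longrightarrow> (\<Sum>y\<in>A i. y ^ e i * lw (A i) y) = (if e i = c i then 1 else 0)" for i
    using g lagrange_mono[of "A i" "c i" "e i"] by (simp add: grid_def)
  show ?thesis
  proof (cases "\<exists>i<n. e i < c i")
    case True
    then obtain i where i: "i < n" "e i < c i" by blast
    have "(\<Prod>i<n. \<Sum>y\<in>A i. y ^ e i * lw (A i) y) = 0"
      using i fac[of i] by (intro prod_zero) auto
    thus ?thesis using i by (auto simp: Lf_mnm[OF fin])
  next
    case False
    have ge: "\<forall>i<n. c i \<le> e i" using False by (meson leI)
    have "sum e {..<n} \<le> sum c {..<n}" using d by (simp add: deg_def)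
    moreover have "sum c {..<n} \<le> sum e {..<n}" using ge by (intro sum_mono) auto
    ultimately have "sum c {..<n} = sum e {..<n}" by simp
    have eq: "\<forall>i<n. e i = c i"
    proof (intro allI impI)
      fix i assume "i < n"
      thus "e i = c i" using sum_mono_inv[of c "{..<n}" e i] ge \<open>sum c {..<n} = sum e {..<n}\<close> by fastforce
    qed
    have "(\<Prod>i<n. \<Sum>y\<in>A i. y ^ e i * lw (A i) y) = 1"
      using eq fac by (intro prod.neutral) auto
    thus ?thesis using eq by (simp add: Lf_mnm[OF fin])
  qed
qed

lemma Lf_rep:
  assumes g: "grid n A c" and r: "rep n d g E cf" and d: "d \<le> deg n c"
  shows "Lf n A g = (\<Sum>e\<in>E. if \<forall>i<n. e i = c i then cf e else 0)"
proof -
  have "g = (\<lambda>x. \<Sum>e\<in>E. cf e * mnm n e x)" using r by (auto simp: rep_def)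
  hence "Lf n A g = (\<Sum>e\<in>E. cf e * Lf n A (mnm n e))" using Lf_lin[where J=E and a=cf and ex="\<lambda>e. e"] by simp
  also have "\<dots> = (\<Sum>e\<in>E. if \<forall>i<n. e i = c i then cf e else 0)"
  proof (rule sum.cong)
    fix e assume "e \<in> E"
    hence "deg n e \<le> deg n c" using r d by (auto simp: rep_def)
    thus "cf e * Lf n A (mnm n e) = (if \<forall>i<n. e i = c i then cf e else 0)"
      by (auto simp: Lf_mnm_val[OF g])
  qed simp
  finally show ?thesis .
qed

lemma Lf_indep:
  assumes "grid n A c" "grid n B c" "ipoly n (deg n c) g"
  shows "Lf n A g = Lf n B g"
proof -
  obtain E cf where r: "rep n (deg n c) g E cf" using rep_exists assms(3) by blast
  show ?thesis using Lf_rep[OF assms(1) r] Lf_rep[OF assms(2) r] by simp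
qed

lemma Lf_low:
  assumes "grid n A c" "ipoly n d g" "d < deg n c"
  shows "Lf n A g = 0"
proof -
  obtain E cf where r: "rep n d g E cf" using rep_exists assms(2) by blast
  have "Lf n A g = (\<Sum>e\<in>E. if \<forall>i<n. e i = c i then cf e else 0)"
    using Lf_rep[OF assms(1) r] assms(3) by simp
  also have "\<dots> = 0"
  proof (rule sum.neutral, intro ballI)
    fix e assume "e \<in> E"
    hence "deg n e \<le> d" using r by (simp add: rep_def)
    have "\<not> (\<forall>i<n. e i = c i)"
    proof
      assume "\<forall>i<n. e i = c i"
      hence "deg n e = deg n c" unfolding deg_def by (intro sum.cong) auto
      with \<open>deg n e \<le> d\<close> assms(3) show False by simp
    qed
    thus "(if \<forall>i<n. e i = c i then cf e else 0) = 0" by auto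
  qed
  finally show ?thesis .
qed

lemma Lf_add: "Lf n A (\<lambda>x. g x + h x) = Lf n A g + Lf n A h"
  unfolding Lf_def by (simp add: distrib_right sum.distrib)

lemma Lf_cmult: "Lf n A (\<lambda>x. a * g x) = a * Lf n A g"
  unfolding Lf_def by (simp add: sum_distrib_left mult.assoc)

definition dl :: "nat \<Rightarrow> nat \<Rightarrow> nat" where "dl i = (\<lambda>j. if j = i then 1 else 0)"
definition cm :: "(nat \<Rightarrow> nat) \<Rightarrow> nat \<Rightarrow> nat \<Rightarrow> nat" where "cm c i = (\<lambda>j. if j = i then c j - 1 else c j)"

lemma mnm_dl: "i < n \<Longrightarrow> x i * mnm n e x = mnm n (\<lambda>j. e j + dl i j) x"
  unfolding mnm_add by (simp add: mnm_def dl_def power_0 if_distrib prod.If_cases)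

lemma deg_dl: "i < n \<Longrightarrow> deg n (\<lambda>j. e j + dl i j) = Suc (deg n e)"
  unfolding deg_add by (simp add: deg_def dl_def sum.If_cases)

lemma deg_cm: "i < n \<Longrightarrow> 1 \<le> c i \<Longrightarrow> Suc (deg n (cm c i)) = deg n c"
proof -
  assume i: "i < n" "1 \<le> c i"
  have "deg n c = deg n (\<lambda>j. cm c i j + dl i j)"
    unfolding deg_def by (rule sum.cong) (use i in \<open>auto simp: cm_def dl_def\<close>)
  thus ?thesis using deg_dl[OF i(1)] by simp
qed

lemma Lf_step:
  assumes g: "grid n A c" and B: "\<And>i. i < n \<Longrightarrow> 1 \<le> c i \<Longrightarrow> grid n (B i) (cm c i)"
    and p: "ipoly n d g" and d: "Suc d = deg n c"
  shows "Lf n A (\<lambda>x. (\<Sum>i<n. x i) * g x) = (\<Sum>i\<in>{i. i < n \<and> 1 \<le> c i}. Lf n (B i) g)"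
proof -
  obtain E cf where r: "rep n d g E cf" using rep_exists p by blast
  have fE: "finite E" and dE: "\<And>e. e \<in> E \<Longrightarrow> deg n e \<le> d" and gE: "\<And>x. g x = (\<Sum>e\<in>E. cf e * mnm n e x)"
    using r by (auto simp: rep_def)
  have "(\<lambda>x. (\<Sum>i<n. x i) * g x) = (\<lambda>x. \<Sum>q\<in>E \<times> {..<n}. cf (fst q) * mnm n (\<lambda>j. fst q j + dl (snd q) j) x)"
  proof
    fix x
    have "(\<Sum>i<n. x i) * g x = (\<Sum>i<n. \<Sum>e\<in>E. cf e * (x i * mnm n e x))"
      unfolding gE sum_product by (simp add: algebra_simps)
    also have "\<dots> = (\<Sum>e\<in>E. \<Sum>i<n. cf e * (x i * mnm n e x))"
      by (rule sum.swap)
    also have "\<dots> = (\<Sum>e\<in>E. \<Sum>i<n. cf e * mnm n (\<lambda>j. e j + dl i j) x)"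
      by (simp add: mnm_dl)
    also have "\<dots> = (\<Sum>q\<in>E \<times> {..<n}. cf (fst q) * mnm n (\<lambda>j. fst q j + dl (snd q) j) x)"
      by (simp add: sum.cartesian_product split_def)
    finally show "(\<Sum>i<n. x i) * g x = \<dots>" .
  qed
  hence "Lf n A (\<lambda>x. (\<Sum>i<n. x i) * g x) = (\<Sum>q\<in>E \<times> {..<n}. cf (fst q) * Lf n A (mnm n (\<lambda>j. fst q j + dl (snd q) j)))"
    using Lf_lin[where J="E \<times> {..<n}" and a="\<lambda>q. cf (fst q)" and ex="\<lambda>q j. fst q j + dl (snd q) j"] by simp
  also have "\<dots> = (\<Sum>q\<in>E \<times> {..<n}. if 1 \<le> c (snd q) \<and> (\<forall>j<n. fst q j = cm c (snd q) j) then cf (fst q) else 0)"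
  proof (rule sum.cong)
    fix q assume q: "q \<in> E \<times> {..<n}"
    obtain e i where qe: "q = (e, i)" "e \<in> E" "i < n" using q by auto
    have "deg n (\<lambda>j. e j + dl i j) \<le> deg n c" using deg_dl[OF qe(3)] dE[OF qe(2)] d by simp
    hence "Lf n A (mnm n (\<lambda>j. e j + dl i j)) = (if \<forall>j<n. e j + dl i j = c j then 1 else 0)"
      by (rule Lf_mnm_val[OF g])
    moreover have "(\<forall>j<n. e j + dl i j = c j) \<longleftrightarrow> (1 \<le> c i \<and> (\<forall>j<n. e j = cm c i j))"
      using qe(3) by (auto simp: dl_def cm_def)
    ultimately show "cf (fst q) * Lf n A (mnm n (\<lambda>j. fst q j + dl (snd q) j)) =
       (if 1 \<le> c (snd q) \<and> (\<forall>j<n. fst q j = cm c (snd q) j) then cf (fst q) else 0)"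
      using qe by auto
  qed simp
  also have "\<dots> = (\<Sum>i<n. \<Sum>e\<in>E. if 1 \<le> c i \<and> (\<forall>j<n. e j = cm c i j) then cf e else 0)"
    by (subst sum.swap) (simp add: sum.cartesian_product split_def)
  also have "\<dots> = (\<Sum>i\<in>{i. i < n \<and> 1 \<le> c i}. \<Sum>e\<in>E. if \<forall>j<n. e j = cm c i j then cf e else 0)"
    by (rule sum.mono_neutral_cong_right) auto
  also have "\<dots> = (\<Sum>i\<in>{i. i < n \<and> 1 \<le> c i}. Lf n (B i) g)"
  proof (rule sum.cong)
    fix i assume "i \<in> {i. i < n \<and> 1 \<le> c i}"
    hence i: "i < n" "1 \<le> c i" by auto
    show "(\<Sum>e\<in>E. if \<forall>j<n. e j = cm c i j then cf e else 0) = Lf n (B i) g"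
      using Lf_rep[OF B[OF i(1) i(2)] r] deg_cm[of i n c] i d by simp
  qed simp
  finally show ?thesis .
qed


definition Pairs :: "nat \<Rightarrow> (nat \<Rightarrow> nat) \<Rightarrow> (nat \<times> nat) set" where
  "Pairs n blk = {(i,j). i < j \<and> j < n \<and> blk i = blk j}"

definition Vd :: "nat \<Rightarrow> (nat \<Rightarrow> nat) \<Rightarrow> (nat \<Rightarrow> real) \<Rightarrow> real" where
  "Vd n blk x = (\<Prod>p\<in>Pairs n blk. x (snd p) - x (fst p))"

definition Kb :: "nat \<Rightarrow> (nat \<Rightarrow> nat) \<Rightarrow> nat \<Rightarrow> nat set" where
  "Kb n blk i = {j. j < n \<and> blk j = blk i}"

definition xm :: "(nat \<Rightarrow> real) \<Rightarrow> nat \<Rightarrow> nat \<Rightarrow> real" where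
  "xm x i = (\<lambda>j. if j = i then x j - 1 else x j)"

lemma finite_Pairs: "finite (Pairs n blk)"
  by (rule finite_subset[of _ "{..<n} \<times> {..<n}"]) (auto simp: Pairs_def)

lemma finite_Kb: "finite (Kb n blk i)"
  by (rule finite_subset[of _ "{..<n}"]) (auto simp: Kb_def)

lemma ipoly_Vd: "ipoly n (card (Pairs n blk)) (Vd n blk)"
proof -
  have "ipoly n (card (Pairs n blk)) (\<lambda>x. \<Prod>p\<in>Pairs n blk. x (snd p) - x (fst p))"
  proof (rule polys_prod[OF finite_Pairs])
    fix p assume "p \<in> Pairs n blk"
    hence "snd p < n" "fst p < n" by (auto simp: Pairs_def)
    thus "ipoly n 1 (\<lambda>x. x (snd p) - x (fst p))" by (intro polys_diff pvar) auto
  qed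
  thus ?thesis unfolding Vd_def .
qed

lemma ipoly_S: "ipoly n 1 (\<lambda>x. \<Sum>i<n. x i)"
  by (rule polys_sum) (auto intro: pvar)

lemma Vd_ratio:
  assumes i: "i < n"
  shows "Vd n blk (xm x i) * (\<Prod>j\<in>Kb n blk i - {i}. x i - x j) = Vd n blk x * (\<Prod>j\<in>Kb n blk i - {i}. x i - x j - 1)"
proof -
  define P where "P = Pairs n blk"
  define Pin where "Pin = {p\<in>P. fst p = i \<or> snd p = i}"
  define K where "K = Kb n blk i - {i}"
  have fP: "finite P" unfolding P_def by (rule finite_Pairs)
  have split: "P = (P - Pin) \<union> Pin" "(P - Pin) \<inter> Pin = {}" unfolding Pin_def by auto
  have fPin: "finite Pin" "finite (P - Pin)" using fP unfolding Pin_def by auto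
  have prodsplit: "(\<Prod>p\<in>P. f p) = (\<Prod>p\<in>P - Pin. f p) * (\<Prod>p\<in>Pin. f p)" for f :: "nat \<times> nat \<Rightarrow> real"
    by (subst prod.union_disjoint[symmetric]) (use fPin in \<open>auto simp: Pin_def\<close>, rule prod.cong, auto simp: Pin_def)
  have reidx: "(\<Prod>p\<in>Pin. f p) = (\<Prod>j\<in>K. f (min i j, max i j))" for f :: "nat \<times> nat \<Rightarrow> real"
    by (rule prod.reindex_bij_witness[of _ "\<lambda>j. (min i j, max i j)" "\<lambda>p. if fst p = i then snd p else fst p"])
       (use i in \<open>auto simp: Pin_def K_def P_def Pairs_def Kb_def min_def max_def\<close>)
  have same: "(\<Prod>p\<in>P - Pin. xm x i (snd p) - xm x i (fst p)) = (\<Prod>p\<in>P - Pin. x (snd p) - x (fst p))"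
    by (rule prod.cong) (auto simp: Pin_def xm_def)
  have K_ne: "j \<in> K \<Longrightarrow> j \<noteq> i" for j unfolding K_def by auto
  have pj: "(xm x i (max i j) - xm x i (min i j)) * (x i - x j) = (x (max i j) - x (min i j)) * (x i - x j - 1)"
    if "j \<in> K" for j
    using K_ne[OF that] by (cases "i < j") (auto simp: xm_def min_def max_def algebra_simps)
  have "Vd n blk (xm x i) * (\<Prod>j\<in>K. x i - x j) =
        (\<Prod>p\<in>P - Pin. x (snd p) - x (fst p)) * (\<Prod>j\<in>K. (xm x i (max i j) - xm x i (min i j)) * (x i - x j))"
    unfolding Vd_def P_def[symmetric] prodsplit[of "\<lambda>p. xm x i (snd p) - xm x i (fst p)"] same reidx
    by (simp add: prod.distrib)
  also have "\<dots> = (\<Prod>p\<in>P - Pin. x (snd p) - x (fst p)) * (\<Prod>j\<in>K. (x (max i j) - x (min i j)) * (x i - x j - 1))"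
    using pj by simp
  also have "\<dots> = Vd n blk x * (\<Prod>j\<in>K. x i - x j - 1)"
    unfolding Vd_def P_def[symmetric] prodsplit[of "\<lambda>p. x (snd p) - x (fst p)"] reidx
    by (simp add: prod.distrib)
  finally show ?thesis unfolding K_def .
qed

lemma card_ltpairs:
  assumes K: "finite (K::nat set)"
  shows "2 * card {(i,j). i\<in>K \<and> j\<in>K \<and> i<j} + card K = card K * card K"
proof -
  define U where "U = {(i,j). i\<in>K \<and> j\<in>K \<and> i<j}"
  define L where "L = {(i,j). i\<in>K \<and> j\<in>K \<and> j<i}"
  define D where "D = {(i,j). i\<in>K \<and> j\<in>K \<and> i=j}"
  have KK: "K \<times> K = U \<union> L \<union> D" unfolding U_def L_def D_def by auto
  have fin: "finite U" "finite L" "finite D" unfolding U_def L_def D_def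
    by (auto intro: finite_subset[of _ "K \<times> K"] simp: K)
  have UL: "card U = card L"
    by (rule bij_betw_same_card[of "\<lambda>(i,j). (j,i)"]) (auto simp: bij_betw_def inj_on_def U_def L_def image_def)
  have Dc: "card D = card K"
    by (rule bij_betw_same_card[of "\<lambda>(i,j). i"]) (auto simp: bij_betw_def inj_on_def D_def image_def)
  have "card (K \<times> K) = card U + card L + card D"
    unfolding KK using fin by (subst card_Un_disjoint, auto simp: U_def L_def D_def card_Un_disjoint)+
  thus ?thesis using UL Dc by (simp add: U_def card_cartesian_product)
qed

definition binj :: "nat \<Rightarrow> (nat \<Rightarrow> nat) \<Rightarrow> (nat \<Rightarrow> real) \<Rightarrow> bool" where
  "binj n blk x \<longleftrightarrow> (\<forall>i<n. \<forall>j<n. blk i = blk j \<longrightarrow> x i = x j \<longrightarrow> i = j)"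

lemma card_Pairs_group:
  "real (card (Pairs n blk)) = (\<Sum>b\<in>blk ` {..<n}.
     real (card {i. i < n \<and> blk i = b}) * (real (card {i. i < n \<and> blk i = b}) - 1) / 2)"
proof -
  have "card (Pairs n blk) = (\<Sum>p\<in>Pairs n blk. 1)" by simp
  also have "\<dots> = (\<Sum>b\<in>blk ` {..<n}. \<Sum>p\<in>{p \<in> Pairs n blk. blk (fst p) = b}. 1)"
    by (rule sum.group[symmetric]) (use finite_Pairs[of n blk] in \<open>auto simp: Pairs_def\<close>)
  also have "\<dots> = (\<Sum>b\<in>blk ` {..<n}. card {(i,j). i\<in>{i. i < n \<and> blk i = b} \<and> j\<in>{i. i < n \<and> blk i = b} \<and> i<j})"
  proof (rule sum.cong)
    fix b
    have "{p \<in> Pairs n blk. blk (fst p) = b} = {(i,j). i\<in>{i. i < n \<and> blk i = b} \<and> j\<in>{i. i < n \<and> blk i = b} \<and> i<j}"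
      by (auto simp: Pairs_def)
    thus "(\<Sum>p\<in>{p \<in> Pairs n blk. blk (fst p) = b}. 1) = card {(i,j). i\<in>{i. i < n \<and> blk i = b} \<and> j\<in>{i. i < n \<and> blk i = b} \<and> i<j}"
      by simp
  qed simp
  finally have "real (card (Pairs n blk)) = (\<Sum>b\<in>blk ` {..<n}. real (card {(i,j). i\<in>{i. i < n \<and> blk i = b} \<and> j\<in>{i. i < n \<and> blk i = b} \<and> i<j}))"
    by simp
  also have "\<dots> = (\<Sum>b\<in>blk ` {..<n}. real (card {i. i < n \<and> blk i = b}) * (real (card {i. i < n \<and> blk i = b}) - 1) / 2)"
  proof (rule sum.cong)
    fix b
    define F where "F = {i. i < n \<and> blk i = b}"
    define C where "C = card {(i,j). i\<in>F \<and> j\<in>F \<and> i<j}"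
    have f: "finite F" by (simp add: F_def)
    have E: "2 * C + card F = card F * card F" using card_ltpairs[OF f] by (simp add: C_def)
    have h: "2 * real C + real (card F) = real (card F) * real (card F)"
      using arg_cong[OF E, of real] by simp
    have "real C = (real (card F) * real (card F) - real (card F)) / 2" using h by (simp add: field_simps)
    also have "\<dots> = real (card F) * (real (card F) - 1) / 2" by (simp add: algebra_simps)
    finally show "real (card {(i,j). i\<in>{i. i < n \<and> blk i = b} \<and> j\<in>{i. i < n \<and> blk i = b} \<and> i<j}) =
       real (card {i. i < n \<and> blk i = b}) * (real (card {i. i < n \<and> blk i = b}) - 1) / 2"
      unfolding C_def F_def .
  qed simp
  finally show ?thesis .
qed

lemma Vd_identity_inj:
  assumes bi: "binj n blk x"
  shows "(\<Sum>i<n. x i * Vd n blk (xm x i)) = ((\<Sum>i<n. x i) - real (card (Pairs n blk))) * Vd n blk x"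
proof -
  define num where "num i = (\<Prod>j\<in>Kb n blk i - {i}. x i - x j - 1)" for i
  define den where "den i = (\<Prod>j\<in>Kb n blk i - {i}. x i - x j)" for i
  have den0: "i < n \<Longrightarrow> den i \<noteq> 0" for i
    unfolding den_def using bi finite_Kb by (auto simp: prod_zero_iff binj_def Kb_def)
  have Vx: "i < n \<Longrightarrow> Vd n blk (xm x i) = Vd n blk x * num i / den i" for i
    using Vd_ratio[of i n blk x] den0[of i] unfolding num_def den_def by (simp add: field_simps)
  have "(\<Sum>i<n. x i * Vd n blk (xm x i)) = Vd n blk x * (\<Sum>i<n. x i * num i / den i)"
    by (simp add: Vx sum_distrib_left algebra_simps)
  also have "(\<Sum>i<n. x i * num i / den i) = (\<Sum>b\<in>blk ` {..<n}. \<Sum>i\<in>{i \<in> {..<n}. blk i = b}. x i * num i / den i)"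
    by (rule sum.group[symmetric]) auto
  also have "\<dots> = (\<Sum>b\<in>blk ` {..<n}. (\<Sum>i\<in>{i \<in> {..<n}. blk i = b}. x i) -
        real (card {i. i < n \<and> blk i = b}) * (real (card {i. i < n \<and> blk i = b}) - 1) / 2)"
  proof (rule sum.cong)
    fix b assume "b \<in> blk ` {..<n}"
    define F where "F = {i \<in> {..<n}. blk i = b}"
    have KF: "i \<in> F \<Longrightarrow> Kb n blk i = F" for i unfolding F_def Kb_def by auto
    have injF: "inj_on x F" using bi unfolding F_def binj_def inj_on_def by auto
    have "(\<Sum>i\<in>F. x i * num i / den i) = (\<Sum>i\<in>F. x i * (\<Prod>j\<in>F-{i}. x i - x j - 1) / (\<Prod>j\<in>F-{i}. x i - x j))"
      by (rule sum.cong) (auto simp: num_def den_def KF)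
    also have "\<dots> = (\<Sum>i\<in>F. x i) - real (card F) * (real (card F) - 1) / 2"
      by (rule block_identity[OF _ injF]) (simp add: F_def)
    finally show "(\<Sum>i\<in>{i \<in> {..<n}. blk i = b}. x i * num i / den i) = (\<Sum>i\<in>{i \<in> {..<n}. blk i = b}. x i) -
        real (card {i. i < n \<and> blk i = b}) * (real (card {i. i < n \<and> blk i = b}) - 1) / 2"
      unfolding F_def by simp
  qed simp
  also have "\<dots> = (\<Sum>i<n. x i) - real (card (Pairs n blk))"
    unfolding sum_subtractf card_Pairs_group by (subst sum.group) auto
  finally show ?thesis by (simp add: mult.commute)
qed


lemma cont_ext:
  fixes F G :: "real \<Rightarrow> real"
  assumes "isCont F 0" "isCont G 0" "finite Bd" "\<And>e. e \<notin> Bd \<Longrightarrow> F e = G e"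
  shows "F 0 = G 0"
proof -
  have ev: "eventually (\<lambda>e. \<forall>b\<in>Bd. e \<noteq> b) (at (0::real))"
    using assms(3) by (intro eventually_ball_finite) (auto intro: eventually_neq_at_within)
  have "eventually (\<lambda>e. F e = G e) (at (0::real))"
    using ev by eventually_elim (use assms(4) in auto)
  moreover have "(F \<longlongrightarrow> F 0) (at 0)" using assms(1) by (simp add: isCont_def)
  ultimately have "(G \<longlongrightarrow> F 0) (at 0)" using tendsto_cong by blast
  moreover have "(G \<longlongrightarrow> G 0) (at 0)" using assms(2) by (simp add: isCont_def)
  ultimately show ?thesis using LIM_unique by blast
qed

lemma Vd_identity:
  "(\<Sum>i<n. x i * Vd n blk (xm x i)) = ((\<Sum>i<n. x i) - real (card (Pairs n blk))) * Vd n blk x"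
proof -
  define xe where "xe e = (\<lambda>j. x j + e * real j)" for e
  define Bd where "Bd = (\<lambda>p. (x (fst p) - x (snd p)) / (real (snd p) - real (fst p))) ` Pairs n blk"
  define F where "F e = (\<Sum>i<n. xe e i * Vd n blk (xm (xe e) i))" for e
  define G where "G e = ((\<Sum>i<n. xe e i) - real (card (Pairs n blk))) * Vd n blk (xe e)" for e
  have fB: "finite Bd" unfolding Bd_def by (simp add: finite_Pairs)
  have FG: "F e = G e" if e: "e \<notin> Bd" for e
  proof -
    have "binj n blk (xe e)"
      unfolding binj_def
    proof (intro allI impI)
      fix i j assume ij: "i < n" "j < n" "blk i = blk j" "xe e i = xe e j"
      show "i = j"
      proof (rule ccontr)
        assume "i \<noteq> j"
        hence "i < j \<or> j < i" by auto
        thus False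
        proof
          assume "i < j"
          hence "(i,j) \<in> Pairs n blk" using ij by (auto simp: Pairs_def)
          moreover have "e = (x i - x j) / (real j - real i)"
            using ij(4) \<open>i < j\<close> by (simp add: xe_def field_simps)
          ultimately show False using e unfolding Bd_def by force
        next
          assume "j < i"
          hence "(j,i) \<in> Pairs n blk" using ij by (auto simp: Pairs_def)
          moreover have "e = (x j - x i) / (real i - real j)"
            using ij(4) \<open>j < i\<close> by (simp add: xe_def field_simps)
          ultimately show False using e unfolding Bd_def by force
        qed
      qed
    qed
    thus ?thesis unfolding F_def G_def by (rule Vd_identity_inj)
  qed
  have xmxe: "xm (xe e) i = (\<lambda>j. xm x i j + e * real j)" for e i
    by (auto simp: xm_def xe_def)
  have cF: "isCont F 0"
    unfolding F_def xmxe unfolding xe_def Vd_def by (intro continuous_intros)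
  have cG: "isCont G 0"
    unfolding G_def unfolding xe_def Vd_def by (intro continuous_intros)
  have "F 0 = G 0" by (rule cont_ext[OF cF cG fB FG])
  moreover have "xe 0 = x" by (simp add: xe_def)
  ultimately show ?thesis unfolding F_def G_def by simp
qed

lemma pairs_sum_bound:
  fixes k :: "nat \<Rightarrow> nat"
  assumes inj: "\<And>i j. i < n \<Longrightarrow> j < n \<Longrightarrow> blk i = blk j \<Longrightarrow> k i = k j \<Longrightarrow> i = j"
  shows "card (Pairs n blk) \<le> (\<Sum>i<n. k i)"
proof -
  define Q where "Q = {(i,j). i < n \<and> j < n \<and> blk i = blk j \<and> k i < k j}"
  have fQ: "finite Q" by (rule finite_subset[of _ "{..<n} \<times> {..<n}"]) (auto simp: Q_def)
  have "card (Pairs n blk) = card Q"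
  proof (rule bij_betw_same_card[of "\<lambda>(i,j). if k i < k j then (i,j) else (j,i)"])
    show "bij_betw (\<lambda>(i,j). if k i < k j then (i,j) else (j,i)) (Pairs n blk) Q"
      unfolding bij_betw_def
    proof
      show "inj_on (\<lambda>(i,j). if k i < k j then (i,j) else (j,i)) (Pairs n blk)"
        unfolding inj_on_def Pairs_def by (auto split: if_splits)
      show "(\<lambda>(i,j). if k i < k j then (i,j) else (j,i)) ` Pairs n blk = Q"
      proof
        show "(\<lambda>(i,j). if k i < k j then (i,j) else (j,i)) ` Pairs n blk \<subseteq> Q"
        proof
          fix q assume "q \<in> (\<lambda>(i,j). if k i < k j then (i,j) else (j,i)) ` Pairs n blk"
          then obtain i j where ij: "(i,j) \<in> Pairs n blk" "q = (if k i < k j then (i,j) else (j,i))" by auto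
          have "k i \<noteq> k j" using inj[of i j] ij(1) by (auto simp: Pairs_def)
          thus "q \<in> Q" using ij by (auto simp: Pairs_def Q_def)
        qed
        show "Q \<subseteq> (\<lambda>(i,j). if k i < k j then (i,j) else (j,i)) ` Pairs n blk"
        proof
          fix q assume "q \<in> Q"
          then obtain i j where ij: "q = (i,j)" "i < n" "j < n" "blk i = blk j" "k i < k j" by (auto simp: Q_def)
          show "q \<in> (\<lambda>(i,j). if k i < k j then (i,j) else (j,i)) ` Pairs n blk"
          proof (cases "i < j")
            case True
            thus ?thesis using ij by (auto simp: Pairs_def image_def intro!: bexI[of _ "(i,j)"])
          next
            case False
            hence "j < i" using ij by (metis less_irrefl nat_neq_iff)
            hence "(j,i) \<in> Pairs n blk" using ij by (auto simp: Pairs_def)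
            moreover have "q = (\<lambda>(i,j). if k i < k j then (i,j) else (j,i)) (j,i)" using ij by auto
            ultimately show ?thesis by blast
          qed
        qed
      qed
    qed
  qed
  also have "card Q = (\<Sum>j<n. card {q \<in> Q. snd q = j})"
  proof -
    have "card Q = (\<Sum>q\<in>Q. 1)" by simp
    also have "\<dots> = (\<Sum>j<n. \<Sum>q\<in>{q \<in> Q. snd q = j}. 1)"
      by (rule sum.group[symmetric]) (use fQ in \<open>auto simp: Q_def\<close>)
    finally show ?thesis by simp
  qed
  also have "\<dots> \<le> (\<Sum>j<n. k j)"
  proof (rule sum_mono)
    fix j assume "j \<in> {..<n}"
    have "card {q \<in> Q. snd q = j} \<le> card {..<k j}"
    proof (rule card_inj_on_le[of "\<lambda>q. k (fst q)"])
      show "inj_on (\<lambda>q. k (fst q)) {q \<in> Q. snd q = j}"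
        unfolding inj_on_def Q_def using inj by auto
      show "(\<lambda>q. k (fst q)) ` {q \<in> Q. snd q = j} \<subseteq> {..<k j}" unfolding Q_def by auto
    qed simp
    thus "card {q \<in> Q. snd q = j} \<le> k j" by simp
  qed
  finally show ?thesis .
qed

definition can :: "(nat \<Rightarrow> nat) \<Rightarrow> nat \<Rightarrow> real set" where
  "can c i = real ` {0..c i}"

lemma grid_can: "grid n (can c) c"
  unfolding grid_def can_def by (simp add: card_image inj_on_def)

lemma lw_can: "lw (can c i) (real (c i)) = 1 / fact (c i)"
proof -
  have "can c i - {real (c i)} = real ` {0..<c i}" unfolding can_def by auto
  hence "(\<Prod>b\<in>can c i - {real (c i)}. real (c i) - b) = (\<Prod>b\<in>{0..<c i}. real (c i) - real b)"
    by (simp add: prod.reindex inj_on_def)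
  also have "\<dots> = (\<Prod>b\<in>{0..<c i}. real (c i - b))" by (rule prod.cong) auto
  also have "\<dots> = fact (c i)"
  proof -
    have "(\<Prod>b\<in>{0..<c i}. real (c i - b)) = (\<Prod>b\<in>{1..c i}. real b)"
      by (rule prod.reindex_bij_witness[of _ "\<lambda>b. c i - b" "\<lambda>b. c i - b"]) auto
    thus ?thesis by (simp add: fact_prod)
  qed
  finally show ?thesis unfolding lw_def by simp
qed

lemma Vd_restrict: "Vd n blk (restrict x {..<n}) = Vd n blk x"
  unfolding Vd_def by (rule prod.cong) (auto simp: Pairs_def)

lemma Phi_base:
  assumes d: "deg n c = card (Pairs n blk)"
  shows "Lf n (can c) (Vd n blk) = Vd n blk (\<lambda>i. real (c i)) / (\<Prod>i<n. fact (c i))"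
proof -
  define a0 where "a0 = restrict (\<lambda>i. real (c i)) {..<n}"
  have a0P: "a0 \<in> PiE {..<n} (can c)" unfolding a0_def can_def by auto
  have zero: "Vd n blk a = 0" if a: "a \<in> PiE {..<n} (can c)" "a \<noteq> a0" for a
  proof (rule ccontr)
    assume nz: "Vd n blk a \<noteq> 0"
    have "\<forall>i<n. \<exists>k. k \<le> c i \<and> a i = real k" using a(1) unfolding can_def by (force simp: PiE_def Pi_def)
    then obtain k where k: "\<And>i. i < n \<Longrightarrow> k i \<le> c i \<and> a i = real (k i)" by metis
    have inj: "i = j" if "i < n" "j < n" "blk i = blk j" "k i = k j" for i j
    proof (rule ccontr)
      assume "i \<noteq> j"
      hence "(i,j) \<in> Pairs n blk \<or> (j,i) \<in> Pairs n blk" using that by (auto simp: Pairs_def)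
      moreover have "a i = a j" using k that by simp
      ultimately obtain p where p: "p \<in> Pairs n blk" "a (snd p) = a (fst p)"
        by (metis fst_conv snd_conv)
      have "Vd n blk a = 0" unfolding Vd_def using finite_Pairs p
        by (auto simp: prod_zero_iff)
      with nz show False by simp
    qed
    have "card (Pairs n blk) \<le> (\<Sum>i<n. k i)" by (rule pairs_sum_bound) (use inj in auto)
    moreover have "(\<Sum>i<n. k i) \<le> (\<Sum>i<n. c i)" using k by (intro sum_mono) auto
    ultimately have "(\<Sum>i<n. k i) = (\<Sum>i<n. c i)" using d by (simp add: deg_def)
    hence "\<forall>i<n. k i = c i" using k sum_mono_inv[of k "{..<n}" c] by (metis lessThan_iff finite_lessThan)
    hence "a = a0" using a(1) k unfolding a0_def by (auto simp: PiE_def extensional_def)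
    with a(2) show False by simp
  qed
  have "Lf n (can c) (Vd n blk) = Vd n blk a0 * (\<Prod>i<n. lw (can c i) (a0 i))"
    unfolding Lf_def
    by (subst sum.remove[OF _ a0P]) (auto intro!: sum.neutral simp: zero finite_PiE can_def)
  also have "\<dots> = Vd n blk (\<lambda>i. real (c i)) / (\<Prod>i<n. fact (c i))"
    unfolding a0_def Vd_restrict by (simp add: lw_can prod_dividef)
  finally show ?thesis .
qed

lemma cm_real: "1 \<le> c i \<Longrightarrow> (\<lambda>j. real (cm c i j)) = xm (\<lambda>j. real (c j)) i"
  by (auto simp: cm_def xm_def of_nat_diff)

lemma prod_fact_cm:
  assumes "i < n" "1 \<le> c i"
  shows "(\<Prod>j<n. fact (cm c i j)) * real (c i) = (\<Prod>j<n. fact (c j) :: real)"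
proof -
  have "(\<Prod>j<n. fact (c j) :: real) = fact (c i) * (\<Prod>j\<in>{..<n}-{i}. fact (c j))"
    using assms by (subst prod.remove[of _ i]) auto
  also have "fact (c i) = (fact (cm c i i) :: real) * real (c i)"
    using assms by (cases "c i") (auto simp: cm_def)
  also have "(\<Prod>j\<in>{..<n}-{i}. fact (c j) :: real) = (\<Prod>j\<in>{..<n}-{i}. fact (cm c i j))"
    by (rule prod.cong) (auto simp: cm_def)
  also have "fact (cm c i i) * real (c i) * (\<Prod>j\<in>{..<n}-{i}. fact (cm c i j) :: real) =
     (\<Prod>j<n. fact (cm c i j)) * real (c i)"
    using assms by (subst (2) prod.remove[of _ i]) auto
  finally show ?thesis by simp
qed

theorem Phi:
  "deg n c = card (Pairs n blk) + m \<Longrightarrow>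
   Lf n (can c) (\<lambda>x. Vd n blk x * (\<Sum>i<n. x i) ^ m) = fact m * Vd n blk (\<lambda>i. real (c i)) / (\<Prod>i<n. fact (c i))"
proof (induction m arbitrary: c)
  case 0
  then show ?case using Phi_base[of n c blk] by simp
next
  case (Suc m)
  define P where "P = card (Pairs n blk)"
  define c' where "c' = (\<lambda>i. real (c i))"
  have gp: "ipoly n (P + m) (\<lambda>x. Vd n blk x * (\<Sum>i<n. x i) ^ m)"
    unfolding P_def by (rule pmult[OF ipoly_Vd polys_power[OF ipoly_S]]) simp
  have "Lf n (can c) (\<lambda>x. Vd n blk x * (\<Sum>i<n. x i) ^ Suc m) =
        Lf n (can c) (\<lambda>x. (\<Sum>i<n. x i) * (Vd n blk x * (\<Sum>i<n. x i) ^ m))"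
    by (simp add: algebra_simps)
  also have "\<dots> = (\<Sum>i\<in>{i. i < n \<and> 1 \<le> c i}. Lf n (can (cm c i)) (\<lambda>x. Vd n blk x * (\<Sum>i<n. x i) ^ m))"
    by (rule Lf_step[OF grid_can _ gp]) (use Suc.prems in \<open>auto simp: P_def grid_can\<close>)
  also have "\<dots> = (\<Sum>i\<in>{i. i < n \<and> 1 \<le> c i}. fact m * real (c i) * Vd n blk (xm c' i) / (\<Prod>j<n. fact (c j)))"
  proof (rule sum.cong)
    fix i assume "i \<in> {i. i < n \<and> 1 \<le> c i}"
    hence i: "i < n" "1 \<le> c i" by auto
    have "deg n (cm c i) = card (Pairs n blk) + m" using deg_cm[of i n c] i Suc.prems by simp
    hence "Lf n (can (cm c i)) (\<lambda>x. Vd n blk x * (\<Sum>i<n. x i) ^ m) =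
       fact m * Vd n blk (\<lambda>j. real (cm c i j)) / (\<Prod>j<n. fact (cm c i j))" by (rule Suc.IH)
    also have "\<dots> = fact m * real (c i) * Vd n blk (xm c' i) / (\<Prod>j<n. fact (c j))"
      unfolding cm_real[of c i, OF i(2)] c'_def prod_fact_cm[of i n c, OF i, symmetric] using i by (simp add: field_simps)
    finally show "Lf n (can (cm c i)) (\<lambda>x. Vd n blk x * (\<Sum>i<n. x i) ^ m) =
       fact m * real (c i) * Vd n blk (xm c' i) / (\<Prod>j<n. fact (c j))" .
  qed simp
  also have "\<dots> = (\<Sum>i<n. fact m * real (c i) * Vd n blk (xm c' i) / (\<Prod>j<n. fact (c j)))"
    by (rule sum.mono_neutral_left) auto
  also have "\<dots> = fact m / (\<Prod>j<n. fact (c j)) * (\<Sum>i<n. c' i * Vd n blk (xm c' i))"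
    by (simp add: sum_distrib_left c'_def field_simps)
  also have "\<dots> = fact m / (\<Prod>j<n. fact (c j)) * (((\<Sum>i<n. c' i) - real P) * Vd n blk c')"
    unfolding Vd_identity P_def ..
  also have "(\<Sum>i<n. c' i) - real P = real (Suc m)"
    using Suc.prems unfolding c'_def P_def deg_def by (simp flip: of_nat_sum)
  finally show ?case by (simp add: c'_def field_simps)
qed


lemma Lf_prod_shift:
  assumes g0: "grid n A c" and C: "finite C"
  shows "\<forall>g d. ipoly n d g \<and> d + card C \<le> deg n c \<longrightarrow>
     Lf n A (\<lambda>x. g x * (\<Prod>t\<in>C. (\<Sum>i<n. x i) - t)) = Lf n A (\<lambda>x. g x * (\<Sum>i<n. x i) ^ card C)"
  using C
proof (induction C rule: finite_induct)
  case empty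
  then show ?case by simp
next
  case (insert a C)
  show ?case
  proof (intro allI impI)
    fix g d assume gd: "ipoly n d g \<and> d + card (insert a C) \<le> deg n c"
    have k: "card (insert a C) = Suc (card C)" using insert by simp
    have gS: "ipoly n (d + 1) (\<lambda>x. g x * (\<Sum>i<n. x i))" using gd by (intro pmult[OF _ ipoly_S]) auto
    have e1: "Lf n A (\<lambda>x. (g x * (\<Sum>i<n. x i)) * (\<Prod>t\<in>C. (\<Sum>i<n. x i) - t)) =
              Lf n A (\<lambda>x. (g x * (\<Sum>i<n. x i)) * (\<Sum>i<n. x i) ^ card C)"
      using insert.IH[rule_format, of "d+1" "\<lambda>x. g x * (\<Sum>i<n. x i)"] gS gd k by simp
    have e2: "Lf n A (\<lambda>x. g x * (\<Prod>t\<in>C. (\<Sum>i<n. x i) - t)) = Lf n A (\<lambda>x. g x * (\<Sum>i<n. x i) ^ card C)"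
      using insert.IH[rule_format, of d g] gd k by simp
    have low: "Lf n A (\<lambda>x. g x * (\<Sum>i<n. x i) ^ card C) = 0"
      by (rule Lf_low[OF g0 pmult[OF _ polys_power[OF ipoly_S]]]) (use gd k in auto)
    have "Lf n A (\<lambda>x. g x * (\<Prod>t\<in>insert a C. (\<Sum>i<n. x i) - t)) =
          Lf n A (\<lambda>x. (g x * (\<Sum>i<n. x i)) * (\<Prod>t\<in>C. (\<Sum>i<n. x i) - t) + (- a) * (g x * (\<Prod>t\<in>C. (\<Sum>i<n. x i) - t)))"
      using insert by (simp add: algebra_simps)
    also have "\<dots> = Lf n A (\<lambda>x. g x * (\<Sum>i<n. x i) ^ card (insert a C))"
      unfolding Lf_add Lf_cmult e1 e2 low using k by (simp add: algebra_simps)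
    finally show "Lf n A (\<lambda>x. g x * (\<Prod>t\<in>insert a C. (\<Sum>i<n. x i) - t)) =
          Lf n A (\<lambda>x. g x * (\<Sum>i<n. x i) ^ card (insert a C))" .
  qed
qed

lemma Lf_main:
  assumes g: "grid n A c" and C: "finite C" "card C = m" and d: "deg n c = card (Pairs n blk) + m"
  shows "Lf n A (\<lambda>x. Vd n blk x * (\<Prod>t\<in>C. (\<Sum>i<n. x i) - t)) =
         fact m * Vd n blk (\<lambda>i. real (c i)) / (\<Prod>i<n. fact (c i))"
proof -
  have "Lf n A (\<lambda>x. Vd n blk x * (\<Prod>t\<in>C. (\<Sum>i<n. x i) - t)) = Lf n A (\<lambda>x. Vd n blk x * (\<Sum>i<n. x i) ^ m)"
    using Lf_prod_shift[OF g C(1)] ipoly_Vd[of n blk] d C(2) by auto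
  also have "\<dots> = Lf n (can c) (\<lambda>x. Vd n blk x * (\<Sum>i<n. x i) ^ m)"
    by (rule Lf_indep[OF g grid_can]) (use d in \<open>auto intro: pmult[OF ipoly_Vd polys_power[OF ipoly_S]]\<close>)
  also have "\<dots> = fact m * Vd n blk (\<lambda>i. real (c i)) / (\<Prod>i<n. fact (c i))"
    by (rule Phi[OF d])
  finally show ?thesis .
qed

definition pint :: "nat \<Rightarrow> real \<Rightarrow> bool" where
  "pint p x \<longleftrightarrow> (\<exists>k::int. x = real_of_int (int p * k))"

lemma pint_mult: "pint p x \<Longrightarrow> y \<in> \<int> \<Longrightarrow> pint p (x * y)"
proof -
  assume "pint p x" "y \<in> \<int>"
  then obtain k j where "x = real_of_int (int p * k)" "y = real_of_int j" unfolding pint_def by (auto elim!: Ints_cases)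
  hence "x * y = real_of_int (int p * (k * j))" by (simp add: algebra_simps)
  thus ?thesis unfolding pint_def by blast
qed

lemma pint_sum: "(\<And>a. a \<in> S \<Longrightarrow> pint p (H a)) \<Longrightarrow> pint p (\<Sum>a\<in>S. H a)"
proof (induction S rule: infinite_finite_induct)
  case (infinite A)
  then show ?case unfolding pint_def by (intro exI[of _ 0]) simp
next
  case empty
  then show ?case unfolding pint_def by (intro exI[of _ 0]) simp
next
  case (insert x F)
  then obtain k1 k2 where "H x = real_of_int (int p * k1)" "(\<Sum>a\<in>F. H a) = real_of_int (int p * k2)"
    unfolding pint_def by blast
  thus ?case using insert unfolding pint_def by (intro exI[of _ "k1 + k2"]) (simp add: algebra_simps)
qed

lemma no_small_mult:
  fixes z :: int
  assumes "int p dvd z" "z \<noteq> 0" "\<bar>z\<bar> < int p"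
  shows False
proof -
  from assms(1) obtain k where "z = int p * k" by (auto simp: dvd_def)
  with assms(2,3) have "k \<noteq> 0" "\<bar>int p * k\<bar> < int p" by auto
  hence "int p * \<bar>k\<bar> < int p * 1" by (simp add: abs_mult)
  moreover have "1 \<le> \<bar>k\<bar>" using \<open>k \<noteq> 0\<close> by linarith
  ultimately have "int p * 1 \<le> int p * \<bar>k\<bar>" by (intro mult_left_mono) auto
  with \<open>int p * \<bar>k\<bar> < int p * 1\<close> show False by linarith
qed

lemma Vd_Ints: "(\<And>i. i < n \<Longrightarrow> x i \<in> \<int>) \<Longrightarrow> Vd n blk x \<in> \<int>"
  unfolding Vd_def by (rule Ints_prod) (auto simp: Pairs_def)

definition Dr :: "real set \<Rightarrow> real \<Rightarrow> real" where
  "Dr S y = (\<Prod>b\<in>S-{y}. y - b)"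

lemma Dr_lw: "finite S \<Longrightarrow> y \<in> S \<Longrightarrow> (\<Prod>z\<in>S. Dr S z) * lw S y = (\<Prod>z\<in>S-{y}. Dr S z)"
proof -
  assume S: "finite S" "y \<in> S"
  have "Dr S y \<noteq> 0" unfolding Dr_def using S by (auto simp: prod_zero_iff)
  moreover have "(\<Prod>z\<in>S. Dr S z) = Dr S y * (\<Prod>z\<in>S-{y}. Dr S z)" using S by (simp add: prod.remove)
  ultimately show ?thesis by (simp add: lw_def Dr_def[symmetric])
qed

lemma Dr_int:
  assumes "finite A" "y \<in> A"
  shows "Dr (real_of_int ` A) (real_of_int y) = real_of_int (\<Prod>b\<in>A-{y}. y - b)"
proof -
  have "real_of_int ` A - {real_of_int y} = real_of_int ` (A - {y})" by auto
  thus ?thesis unfolding Dr_def by (simp add: prod.reindex inj_on_def)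
qed

theorem ANR:
  fixes p n m :: nat and blk :: "nat \<Rightarrow> nat" and A :: "nat \<Rightarrow> int set" and c :: "nat \<Rightarrow> nat"
  assumes pr: "prime p"
    and Asub: "\<And>i. i < n \<Longrightarrow> A i \<subseteq> {0..<int p}"
    and Acard: "\<And>i. i < n \<Longrightarrow> card (A i) = Suc (c i)"
    and cdist: "\<And>i j. i < n \<Longrightarrow> j < n \<Longrightarrow> i \<noteq> j \<Longrightarrow> blk i = blk j \<Longrightarrow> c i \<noteq> c j"
    and d: "deg n c = card (Pairs n blk) + m"
    and mp: "m < p"
  shows "m < card {(\<Sum>i<n. a i) mod int p | a. a \<in> PiE {..<n} A \<and>
                   (\<forall>i<n. \<forall>j<n. i \<noteq> j \<longrightarrow> blk i = blk j \<longrightarrow> a i \<noteq> a j)}"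
proof (rule ccontr)
  define Sums where "Sums = {(\<Sum>i<n. a i) mod int p | a. a \<in> PiE {..<n} A \<and>
                   (\<forall>i<n. \<forall>j<n. i \<noteq> j \<longrightarrow> blk i = blk j \<longrightarrow> a i \<noteq> a j)}"
  assume "\<not> m < card {(\<Sum>i<n. a i) mod int p | a. a \<in> PiE {..<n} A \<and>
                   (\<forall>i<n. \<forall>j<n. i \<noteq> j \<longrightarrow> blk i = blk j \<longrightarrow> a i \<noteq> a j)}"
  hence cS: "card Sums \<le> m" unfolding Sums_def by simp
  have p0: "0 < p" using pr prime_gt_0_nat by blast
  have SS: "Sums \<subseteq> {0..<int p}" unfolding Sums_def using p0 by auto
  have fS: "finite Sums" using SS finite_subset by blast
  have "m - card Sums \<le> card ({0..<int p} - Sums)"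
    using SS fS mp cS by (simp add: card_Diff_subset)
  then obtain T where T: "T \<subseteq> {0..<int p} - Sums" "card T = m - card Sums" "finite T"
    by (rule obtain_subset_with_card_n)
  define C' where "C' = Sums \<union> T"
  have C'1: "Sums \<subseteq> C'" "C' \<subseteq> {0..<int p}" using SS T unfolding C'_def by auto
  have C'2: "card C' = m" unfolding C'_def using T fS cS by (subst card_Un_disjoint) auto
  have fC': "finite C'" using C'1(2) finite_subset by blast
  define Cr where "Cr = real_of_int ` C'"
  have Cr: "finite Cr" "card Cr = m" unfolding Cr_def using fC' C'2 by (auto simp: card_image inj_on_def)
  define Ar where "Ar i = real_of_int ` A i" for i
  have finA: "i < n \<Longrightarrow> finite (A i)" for i using Acard[of i] card.infinite by force
  have gAr: "grid n Ar c" unfolding grid_def Ar_def using finA Acard by (auto simp: card_image inj_on_def)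
  define f where "f x = Vd n blk x * (\<Prod>t\<in>Cr. (\<Sum>i<n. x i) - t)" for x
  have L1: "Lf n Ar f = fact m * Vd n blk (\<lambda>i. real (c i)) / (\<Prod>i<n. fact (c i))"
    unfolding f_def by (rule Lf_main[OF gAr Cr d])
  define W where "W = (\<Prod>i<n. \<Prod>y\<in>Ar i. Dr (Ar i) y)"
  have L2: "pint p (W * Lf n Ar f)"
  proof -
    have "W * Lf n Ar f = (\<Sum>a\<in>PiE {..<n} Ar. f a * (W * (\<Prod>i<n. lw (Ar i) (a i))))"
      unfolding Lf_def sum_distrib_left by (simp add: algebra_simps)
    moreover have "pint p (f a * (W * (\<Prod>i<n. lw (Ar i) (a i))))" if a: "a \<in> PiE {..<n} Ar" for a
    proof (rule pint_mult)
      have "W * (\<Prod>i<n. lw (Ar i) (a i)) = (\<Prod>i<n. (\<Prod>y\<in>Ar i. Dr (Ar i) y) * lw (Ar i) (a i))"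
        unfolding W_def by (simp add: prod.distrib)
      also have "\<dots> = (\<Prod>i<n. \<Prod>y\<in>Ar i - {a i}. Dr (Ar i) y)"
      proof (rule prod.cong)
        fix i assume "i \<in> {..<n}"
        hence i: "i < n" "a i \<in> Ar i" using a by auto
        show "(\<Prod>y\<in>Ar i. Dr (Ar i) y) * lw (Ar i) (a i) = (\<Prod>y\<in>Ar i - {a i}. Dr (Ar i) y)"
          by (rule Dr_lw[OF _ i(2)]) (use finA i in \<open>auto simp: Ar_def\<close>)
      qed simp
      also have "\<dots> \<in> \<int>"
      proof (intro Ints_prod)
        fix i y assume "i \<in> {..<n}" "y \<in> Ar i - {a i}"
        then obtain y' where "y = real_of_int y'" "y' \<in> A i" "i < n" by (auto simp: Ar_def)
        thus "Dr (Ar i) y \<in> \<int>" unfolding Ar_def using Dr_int[OF finA] by auto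
      qed
      finally show "W * (\<Prod>i<n. lw (Ar i) (a i)) \<in> \<int>" .
    next
      have aint: "\<forall>i<n. \<exists>z. z \<in> A i \<and> a i = real_of_int z" using a by (force simp: Ar_def PiE_def Pi_def)
      then obtain a' where a': "\<And>i. i < n \<Longrightarrow> a' i \<in> A i \<and> a i = real_of_int (a' i)" by metis
      show "pint p (f a)"
      proof (cases "\<forall>i<n. \<forall>j<n. i \<noteq> j \<longrightarrow> blk i = blk j \<longrightarrow> a i \<noteq> a j")
        case False
        then obtain i j where ij: "i < n" "j < n" "i \<noteq> j" "blk i = blk j" "a i = a j" by blast
        hence "(i,j) \<in> Pairs n blk \<or> (j,i) \<in> Pairs n blk" by (auto simp: Pairs_def)
        then obtain q where q: "q \<in> Pairs n blk" "a (snd q) = a (fst q)" using ij(5) by (metis fst_conv snd_conv)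
        have "Vd n blk a = 0" unfolding Vd_def using q finite_Pairs by (auto simp: prod_zero_iff)
        thus ?thesis unfolding f_def pint_def by (intro exI[of _ 0]) simp
      next
        case True
        define a'' where "a'' = restrict a' {..<n}"
        have a''P: "a'' \<in> PiE {..<n} A" unfolding a''_def using a' by auto
        have a''d: "\<forall>i<n. \<forall>j<n. i \<noteq> j \<longrightarrow> blk i = blk j \<longrightarrow> a'' i \<noteq> a'' j"
          using True a' unfolding a''_def by auto
        define s where "s = (\<Sum>i<n. a'' i)"
        have "s mod int p \<in> Sums" unfolding Sums_def s_def using a''P a''d by blast
        hence t0: "real_of_int (s mod int p) \<in> Cr" using C'1 unfolding Cr_def by auto
        have Sa: "(\<Sum>i<n. a i) = real_of_int s" unfolding s_def a''_def using a' by simp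
        have "f a = Vd n blk a * (((\<Sum>i<n. a i) - real_of_int (s mod int p)) *
                  (\<Prod>t\<in>Cr - {real_of_int (s mod int p)}. (\<Sum>i<n. a i) - t))"
          unfolding f_def using t0 Cr by (simp add: prod.remove)
        also have "(\<Sum>i<n. a i) - real_of_int (s mod int p) = real_of_int (int p * (s div int p))"
          unfolding Sa by (simp add: minus_mod_eq_mult_div[symmetric])
        finally have fa: "f a = real_of_int (int p * (s div int p)) *
                  (Vd n blk a * (\<Prod>t\<in>Cr - {real_of_int (s mod int p)}. (\<Sum>i<n. a i) - t))"
          by (simp add: algebra_simps)
        have "Vd n blk a \<in> \<int>" by (rule Vd_Ints) (use a' in auto)
        moreover have "(\<Prod>t\<in>Cr - {real_of_int (s mod int p)}. (\<Sum>i<n. a i) - t) \<in> \<int>"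
          unfolding Sa Cr_def by (intro Ints_prod) auto
        ultimately show ?thesis unfolding fa by (intro pint_mult) (auto simp: pint_def)
      qed
    qed
    ultimately show ?thesis by (simp add: pint_sum)
  qed
  define Wz where "Wz = (\<Prod>i<n. \<Prod>y\<in>A i. \<Prod>b\<in>A i-{y}. y - b)"
  have WWz: "W = real_of_int Wz"
  proof -
    have "W = (\<Prod>i<n. \<Prod>y\<in>A i. Dr (Ar i) (real_of_int y))"
      unfolding W_def Ar_def by (rule prod.cong) (auto simp: prod.reindex inj_on_def)
    also have "\<dots> = (\<Prod>i<n. \<Prod>y\<in>A i. real_of_int (\<Prod>b\<in>A i-{y}. y - b))"
      by (rule prod.cong, simp, rule prod.cong) (use finA in \<open>auto simp: Ar_def Dr_int\<close>)
    finally show ?thesis unfolding Wz_def by simp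
  qed
  have ip: "prime (int p)" using pr by (simp add: prime_nat_int_transfer)
  have Wnd: "\<not> int p dvd Wz"
  proof
    assume "int p dvd Wz"
    then obtain i y b where iyb: "i < n" "y \<in> A i" "b \<in> A i - {y}" "int p dvd (y - b)"
      unfolding Wz_def using ip finA by (auto simp: prime_dvd_prod_iff)
    have yb: "y \<in> {0..<int p}" "b \<in> {0..<int p}" using iyb Asub[of i] by auto
    have "y - b \<noteq> 0" "\<bar>y - b\<bar> < int p" using iyb yb by auto
    thus False using no_small_mult[OF iyb(4)] by blast
  qed
  define Vz where "Vz = (\<Prod>q\<in>Pairs n blk. int (c (snd q)) - int (c (fst q)))"
  have VVz: "Vd n blk (\<lambda>i. real (c i)) = real_of_int Vz" unfolding Vd_def Vz_def by simp
  have cp: "i < n \<Longrightarrow> c i < p" for i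
  proof -
    assume i: "i < n"
    have "card (A i) \<le> card {0..<int p}" using Asub[OF i] by (intro card_mono) auto
    thus ?thesis using Acard[OF i] by simp
  qed
  have Vnd: "\<not> int p dvd Vz"
  proof
    assume "int p dvd Vz"
    then obtain q where q: "q \<in> Pairs n blk" "int p dvd (int (c (snd q)) - int (c (fst q)))"
      unfolding Vz_def using ip finite_Pairs by (auto simp: prime_dvd_prod_iff)
    have qq: "fst q < n" "snd q < n" "fst q \<noteq> snd q" "blk (fst q) = blk (snd q)" using q(1) by (auto simp: Pairs_def)
    have "c (snd q) \<noteq> c (fst q)" using cdist[OF qq(2) qq(1)] qq by auto
    hence "int (c (snd q)) - int (c (fst q)) \<noteq> 0" by simp
    moreover have "\<bar>int (c (snd q)) - int (c (fst q))\<bar> < int p" using cp[OF qq(1)] cp[OF qq(2)] by auto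
    ultimately show False using no_small_mult[OF q(2)] by blast
  qed
  define Fz where "Fz = (\<Prod>i<n. fact (c i) :: int)"
  have FFz: "(\<Prod>i<n. fact (c i) :: real) = real_of_int Fz" unfolding Fz_def by simp
  have Fz0: "Fz \<noteq> 0" unfolding Fz_def by simp
  obtain K where K: "W * Lf n Ar f = real_of_int (int p * K)" using L2 unfolding pint_def by blast
  have "real_of_int (Wz * (fact m * Vz)) = real_of_int (int p * K * Fz)"
  proof -
    have "real_of_int (Wz * (fact m * Vz)) = W * (fact m * Vd n blk (\<lambda>i. real (c i)))"
      by (simp add: WWz VVz)
    also have "\<dots> = W * Lf n Ar f * (\<Prod>i<n. fact (c i))"
      unfolding L1 by (simp add: field_simps)
    also have "\<dots> = real_of_int (int p * K * Fz)" unfolding K FFz by simp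
    finally show ?thesis .
  qed
  hence "Wz * (fact m * Vz) = int p * K * Fz" by (simp only: of_int_eq_iff)
  hence "int p dvd Wz * (fact m * Vz)" by (metis dvd_triv_left mult.assoc)
  hence "int p dvd Wz \<or> int p dvd fact m \<or> int p dvd Vz" using ip by (simp add: prime_dvd_mult_iff)
  moreover have "\<not> int p dvd fact m"
  proof
    assume "int p dvd fact m"
    hence "int p dvd int (fact m)" by (simp add: of_nat_fact)
    hence "p dvd fact m" by (simp only: of_nat_dvd_iff)
    thus False using pr mp by (simp add: prime_dvd_fact_iff)
  qed
  ultimately show False using Wnd Vnd by blast
qed


definition pt :: "nat \<Rightarrow> int \<times> int \<Rightarrow> int \<times> int \<Rightarrow> int \<Rightarrow> int \<Rightarrow> int \<times> int" where
  "pt p u v j t = ((j * fst v + t * fst u) mod int p, (j * snd v + t * snd u) mod int p)"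

lemma lam_pt: "lam p A u v j = card {a \<in> A. \<exists>t \<in> Zp p. a = pt p u v j t}"
  unfolding lam_def pt_def by simp

lemma Zp_abs: "x \<in> Zp p \<Longrightarrow> y \<in> Zp p \<Longrightarrow> \<bar>x - y\<bar> < int p"
  unfolding Zp_def by auto

lemma dvd_small_zero: "int p dvd z \<Longrightarrow> \<bar>z\<bar> < int p \<Longrightarrow> z = 0"
  using no_small_mult by blast

lemma pt_inj:
  assumes pr: "prime p" and vf: "valid_frame p u v"
    and jt: "j \<in> Zp p" "j' \<in> Zp p" "t \<in> Zp p" "t' \<in> Zp p"
    and eq: "pt p u v j t = pt p u v j' t'"
  shows "j = j' \<and> t = t'"
proof -
  obtain u1 u2 v1 v2 where uv: "u = (u1,u2)" "v = (v1,v2)" by (cases u, cases v) auto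
  define x where "x = j - j'"
  define y where "y = t - t'"
  define D where "D = u1 * v2 - u2 * v1"
  have ip: "prime (int p)" using pr by (simp add: prime_nat_int_transfer)
  have nD: "\<not> int p dvd D" using vf unfolding valid_frame_def D_def uv by (simp add: dvd_eq_mod_eq_0)
  have e1: "int p dvd x * v1 + y * u1"
  proof -
    have "(j * v1 + t * u1) mod int p = (j' * v1 + t' * u1) mod int p" using eq unfolding pt_def uv by simp
    hence "int p dvd (j * v1 + t * u1) - (j' * v1 + t' * u1)" by (simp add: mod_eq_dvd_iff)
    thus ?thesis unfolding x_def y_def by (simp add: algebra_simps)
  qed
  have e2: "int p dvd x * v2 + y * u2"
  proof -
    have "(j * v2 + t * u2) mod int p = (j' * v2 + t' * u2) mod int p" using eq unfolding pt_def uv by simp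
    hence "int p dvd (j * v2 + t * u2) - (j' * v2 + t' * u2)" by (simp add: mod_eq_dvd_iff)
    thus ?thesis unfolding x_def y_def by (simp add: algebra_simps)
  qed
  have "int p dvd u1 * (x * v2 + y * u2) - u2 * (x * v1 + y * u1)" using e1 e2 by (simp add: dvd_diff)
  hence "int p dvd x * D" unfolding D_def by (simp add: algebra_simps)
  hence "int p dvd x" using ip nD by (simp add: prime_dvd_mult_iff)
  hence "x = 0" using dvd_small_zero Zp_abs[OF jt(1,2)] unfolding x_def by blast
  have "int p dvd v2 * (x * v1 + y * u1) - v1 * (x * v2 + y * u2)" using e1 e2 by (simp add: dvd_diff)
  hence "int p dvd y * D" unfolding D_def by (simp add: algebra_simps)
  hence "int p dvd y" using ip nD by (simp add: prime_dvd_mult_iff)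
  hence "y = 0" using dvd_small_zero Zp_abs[OF jt(3,4)] unfolding y_def by blast
  show ?thesis using \<open>x = 0\<close> \<open>y = 0\<close> unfolding x_def y_def by simp
qed

definition Tset :: "nat \<Rightarrow> (int \<times> int) set \<Rightarrow> int \<times> int \<Rightarrow> int \<times> int \<Rightarrow> int \<Rightarrow> int set" where
  "Tset p A u v j = {t \<in> Zp p. pt p u v j t \<in> A}"

lemma lam_Tset:
  assumes pr: "prime p" and vf: "valid_frame p u v" and j: "j \<in> Zp p"
  shows "lam p A u v j = card (Tset p A u v j)"
proof -
  have "{a \<in> A. \<exists>t \<in> Zp p. a = pt p u v j t} = pt p u v j ` Tset p A u v j"
    unfolding Tset_def by auto
  moreover have "inj_on (pt p u v j) (Tset p A u v j)"
    unfolding inj_on_def Tset_def using pt_inj[OF pr vf j j] by blast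
  ultimately show ?thesis unfolding lam_pt by (simp add: card_image)
qed

lemma finite_Zp: "finite (Zp p)" unfolding Zp_def by simp

lemma zero_sum_from_X:
  assumes pr: "prime p" and vf: "valid_frame p u v"
    and X: "X \<subseteq> Zp p \<times> Zp p" "(\<lambda>x. pt p u v (fst x) (snd x)) ` X \<subseteq> A" "X \<noteq> {}"
    and s1: "(\<Sum>x\<in>X. fst x) mod int p = 0" and s2: "(\<Sum>x\<in>X. snd x) mod int p = 0"
  shows "\<exists>B \<subseteq> A. B \<noteq> {} \<and> (\<Sum>b\<in>B. fst b) mod int p = 0 \<and> (\<Sum>b\<in>B. snd b) mod int p = 0"
proof -
  define B where "B = (\<lambda>x. pt p u v (fst x) (snd x)) ` X"
  have inj: "inj_on (\<lambda>x. pt p u v (fst x) (snd x)) X"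
    unfolding inj_on_def
  proof (intro ballI impI)
    fix x y assume xy: "x \<in> X" "y \<in> X" "pt p u v (fst x) (snd x) = pt p u v (fst y) (snd y)"
    have "fst x \<in> Zp p" "fst y \<in> Zp p" "snd x \<in> Zp p" "snd y \<in> Zp p" using xy X(1) by auto
    from pt_inj[OF pr vf this xy(3)] show "x = y" by (simp add: prod_eq_iff)
  qed
  have sums: "(\<Sum>b\<in>B. g b) = (\<Sum>x\<in>X. g (pt p u v (fst x) (snd x)))" for g :: "int \<times> int \<Rightarrow> int"
    unfolding B_def by (simp add: sum.reindex[OF inj])
  have m1: "(\<Sum>b\<in>B. fst b) mod int p = 0"
  proof -
    have "(\<Sum>b\<in>B. fst b) mod int p = (\<Sum>x\<in>X. (fst x * fst v + snd x * fst u) mod int p) mod int p"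
      unfolding sums pt_def by simp
    also have "\<dots> = (\<Sum>x\<in>X. fst x * fst v + snd x * fst u) mod int p" by (rule mod_sum_eq)
    also have "\<dots> = (fst v * (\<Sum>x\<in>X. fst x) + fst u * (\<Sum>x\<in>X. snd x)) mod int p"
      by (simp add: sum.distrib sum_distrib_left mult.commute)
    also have "\<dots> = 0"
      using s1 s2 by (simp add: dvd_eq_mod_eq_0[symmetric])
    finally show ?thesis .
  qed
  have m2: "(\<Sum>b\<in>B. snd b) mod int p = 0"
  proof -
    have "(\<Sum>b\<in>B. snd b) mod int p = (\<Sum>x\<in>X. (fst x * snd v + snd x * snd u) mod int p) mod int p"
      unfolding sums pt_def by simp
    also have "\<dots> = (\<Sum>x\<in>X. fst x * snd v + snd x * snd u) mod int p" by (rule mod_sum_eq)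
    also have "\<dots> = (snd v * (\<Sum>x\<in>X. fst x) + snd u * (\<Sum>x\<in>X. snd x)) mod int p"
      by (simp add: sum.distrib sum_distrib_left mult.commute)
    also have "\<dots> = 0"
      using s1 s2 by (simp add: dvd_eq_mod_eq_0[symmetric])
    finally show ?thesis .
  qed
  have "B \<subseteq> A" "B \<noteq> {}" using X(2,3) unfolding B_def by auto
  thus ?thesis using m1 m2 by (intro exI[of _ B]) auto
qed


lemma block_sizes:
  fixes h w x :: nat
  assumes x: "x \<le> h * w"
  shows "\<exists>g. (\<forall>r r'. r < r' \<longrightarrow> r' < h \<longrightarrow> g r \<le> g r') \<and> (\<forall>r<h. g r \<le> w) \<and> (\<Sum>r<h. g r) = x"
proof (cases "h = 0")
  case True
  thus ?thesis using x by (intro exI[of _ "\<lambda>_. 0"]) auto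
next
  case False
  define q where "q = x div h"
  define s where "s = x mod h"
  have xs: "x = h * q + s" unfolding q_def s_def by simp
  have sh: "s < h" unfolding s_def using False by simp
  have h0: "0 < h" using False by simp
  define g where "g r = q + (if h - s \<le> r then 1 else 0)" for r
  have "(\<Sum>r<h. g r) = h * q + card {r. r < h \<and> h - s \<le> r}"
    unfolding g_def by (simp add: sum.distrib sum.If_cases Int_def conj_commute)
  also have "{r. r < h \<and> h - s \<le> r} = {h - s..<h}" by auto
  finally have sg: "(\<Sum>r<h. g r) = x" using xs sh by simp
  have gw: "\<forall>r<h. g r \<le> w"
  proof (cases "s = 0")
    case True
    hence "h * q \<le> h * w" using x xs by simp
    hence "q \<le> w" using False by simp
    thus ?thesis using True by (simp add: g_def)
  next
    case False
    hence "h * q < h * w" using x xs by linarith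
    hence "q < w" using h0 by (simp add: mult_less_cancel1)
    thus ?thesis by (simp add: g_def)
  qed
  have "\<forall>r r'. r < r' \<longrightarrow> r' < h \<longrightarrow> g r \<le> g r'" by (auto simp: g_def)
  thus ?thesis using gw sg by blast
qed

lemma distribute:
  fixes cap :: "'a \<Rightarrow> nat"
  assumes "finite S" "M \<le> (\<Sum>i\<in>S. cap i)"
  shows "\<exists>x. (\<forall>i\<in>S. x i \<le> cap i) \<and> (\<Sum>i\<in>S. x i) = M"
  using assms
proof (induction S arbitrary: M rule: finite_induct)
  case empty
  then show ?case by simp
next
  case (insert a F)
  show ?case
  proof (cases "M \<le> (\<Sum>i\<in>F. cap i)")
    case True
    then obtain x where x: "\<forall>i\<in>F. x i \<le> cap i" "(\<Sum>i\<in>F. x i) = M" using insert by blast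
    define y where "y = x(a := 0)"
    have "(\<Sum>i\<in>F. y i) = (\<Sum>i\<in>F. x i)" unfolding y_def using insert by (intro sum.cong) auto
    thus ?thesis using x insert by (intro exI[of _ y]) (auto simp: y_def)
  next
    case False
    define y where "y = cap(a := M - (\<Sum>i\<in>F. cap i))"
    have "(\<Sum>i\<in>F. y i) = (\<Sum>i\<in>F. cap i)" unfolding y_def using insert by (intro sum.cong) auto
    thus ?thesis using False insert by (intro exI[of _ y]) (auto simp: y_def)
  qed
qed

lemma card_Pairs_alt:
  "real (card (Pairs n blk)) = (\<Sum>k<n. (real (card (Kb n blk k)) - 1) / 2)"
proof -
  have "(\<Sum>k<n. (real (card (Kb n blk k)) - 1) / 2) =
        (\<Sum>b\<in>blk ` {..<n}. \<Sum>k\<in>{k \<in> {..<n}. blk k = b}. (real (card (Kb n blk k)) - 1) / 2)"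
    by (rule sum.group[symmetric]) auto
  also have "\<dots> = (\<Sum>b\<in>blk ` {..<n}. real (card {i. i < n \<and> blk i = b}) * (real (card {i. i < n \<and> blk i = b}) - 1) / 2)"
  proof (rule sum.cong)
    fix b assume "b \<in> blk ` {..<n}"
    have "(\<Sum>k\<in>{k \<in> {..<n}. blk k = b}. (real (card (Kb n blk k)) - 1) / 2) =
          (\<Sum>k\<in>{k \<in> {..<n}. blk k = b}. (real (card {i. i < n \<and> blk i = b}) - 1) / 2)"
      by (rule sum.cong) (auto simp: Kb_def)
    also have "\<dots> = real (card {i. i < n \<and> blk i = b}) * (real (card {i. i < n \<and> blk i = b}) - 1) / 2"
      by simp
    finally show "(\<Sum>k\<in>{k \<in> {..<n}. blk k = b}. (real (card (Kb n blk k)) - 1) / 2) =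
       real (card {i. i < n \<and> blk i = b}) * (real (card {i. i < n \<and> blk i = b}) - 1) / 2" .
  qed simp
  finally show ?thesis using card_Pairs_group[of n blk] by simp
qed

lemma sum_lessThan_real: "(\<Sum>r<h. real r) = real h * (real h - 1) / 2"
  by (induction h) (auto simp: field_simps)

lemma case1:
  fixes p :: nat and A :: "(int \<times> int) set" and u v :: "int \<times> int" and I :: "int set"
  assumes pr: "prime p" and vf: "valid_frame p u v"
    and IZ: "I \<subseteq> Zp p" and I1: "\<forall>i\<in>I. lam p A u v i \<ge> 1"
    and ss: "subset_sums p (I \<union> {j \<in> Zp p. odd (lam p A u v j)}) = Zp p"
    and tot: "(\<Sum>i\<in>Zp p. let ls = (if i \<in> I then lam p A u v i - 1 else lam p A u v i) in
                   (ls div 2) * ((ls + 1) div 2)) \<ge> p - 1"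
  shows "\<exists>B\<subseteq>A. B \<noteq> {} \<and> (\<Sum>b\<in>B. fst b) mod int p = 0 \<and> (\<Sum>b\<in>B. snd b) mod int p = 0"
proof -
  define lm where "lm = lam p A u v"
  define J where "J = {j \<in> Zp p. odd (lm j)}"
  define ls where "ls i = (if i \<in> I then lm i - 1 else lm i)" for i
  define T where "T j = Tset p A u v j" for j
  have p1: "1 < p" using pr prime_gt_1_nat by blast
  have cT: "j \<in> Zp p \<Longrightarrow> card (T j) = lm j" for j unfolding T_def lm_def using lam_Tset[OF pr vf] by simp
  have TZ: "T j \<subseteq> Zp p" for j unfolding T_def Tset_def by auto
  have fT: "finite (T j)" for j using TZ finite_Zp finite_subset by blast
  define e where "e i = (SOME t. t \<in> T i)" for i
  have eT: "i \<in> I \<Longrightarrow> e i \<in> T i" for i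
  proof -
    assume i: "i \<in> I"
    hence "card (T i) \<ge> 1" using cT I1 IZ lm_def by auto
    hence "T i \<noteq> {}" by auto
    thus ?thesis unfolding e_def by (simp add: some_in_eq)
  qed
  define T' where "T' i = (if i \<in> I then T i - {e i} else T i)" for i
  have T'T: "T' i \<subseteq> T i" for i unfolding T'_def by auto
  have cT': "j \<in> Zp p \<Longrightarrow> card (T' j) = ls j" for j
    unfolding T'_def ls_def using cT eT fT by (auto simp: card_Diff_singleton)
  have eT': "i \<in> I \<Longrightarrow> e i \<notin> T' j" if "j = i" for i j using that unfolding T'_def by auto
  define base where "base = (\<Sum>j\<in>Zp p. j * int (ls j div 2))"
  have "(- base) mod int p \<in> Zp p" unfolding Zp_def using p1 by auto
  hence "(- base) mod int p \<in> subset_sums p (I \<union> J)" using ss unfolding J_def lm_def by simp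
  then obtain K where K: "K \<subseteq> I \<union> J" "(\<Sum>K) mod int p = (- base) mod int p"
    unfolding subset_sums_def by auto
  have JZ: "J \<subseteq> Zp p" unfolding J_def by auto
  have KZ: "K \<subseteq> Zp p" using K(1) IZ JZ by auto
  define h where "h j = ls j div 2 + (if j \<in> K \<and> j \<notin> I then 1 else 0)" for j
  have hw: "h j \<le> ls j \<and> h j * (ls j - h j) = (ls j div 2) * ((ls j + 1) div 2)" for j
  proof (cases "j \<in> K \<and> j \<notin> I")
    case True
    hence "j \<in> J" using K(1) by auto
    hence "odd (ls j)" using True unfolding J_def ls_def by auto
    then obtain q where q: "ls j = 2 * q + 1" by (metis oddE)
    hence hj: "h j = q + 1" using True by (simp add: h_def)
    show ?thesis unfolding hj q by simp
  next
    case False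
    hence hj: "h j = ls j div 2" by (simp add: h_def)
    have "ls j - ls j div 2 = (ls j + 1) div 2" by presburger
    thus ?thesis unfolding hj by simp
  qed
  define cap where "cap j = h j * (ls j - h j)" for j
  have capsum: "p - 1 \<le> (\<Sum>j\<in>Zp p. cap j)"
    using tot unfolding cap_def hw ls_def lm_def Let_def by (simp add: hw[unfolded ls_def lm_def])
  obtain x where x: "\<forall>j\<in>Zp p. x j \<le> cap j" "(\<Sum>j\<in>Zp p. x j) = p - 1"
    using distribute[OF finite_Zp capsum] by blast
  have "\<forall>j. \<exists>g. j \<in> Zp p \<longrightarrow> (\<forall>r r'. r < r' \<longrightarrow> r' < h j \<longrightarrow> g r \<le> g r') \<and> (\<forall>r<h j. g r \<le> ls j - h j) \<and> (\<Sum>r<h j. g r) = x j"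
  proof
    fix j
    show "\<exists>g. j \<in> Zp p \<longrightarrow> (\<forall>r r'. r < r' \<longrightarrow> r' < h j \<longrightarrow> g r \<le> g r') \<and> (\<forall>r<h j. g r \<le> ls j - h j) \<and> (\<Sum>r<h j. g r) = x j"
    proof (cases "j \<in> Zp p")
      case True
      hence "x j \<le> h j * (ls j - h j)" using x(1) unfolding cap_def by blast
      from block_sizes[OF this] show ?thesis by blast
    qed simp
  qed
  then obtain G where G: "\<And>j. j \<in> Zp p \<Longrightarrow> (\<forall>r r'. r < r' \<longrightarrow> r' < h j \<longrightarrow> G j r \<le> G j r') \<and> (\<forall>r<h j. G j r \<le> ls j - h j) \<and> (\<Sum>r<h j. G j r) = x j"
    by metis
  define cc where "cc j r = r + G j r" for j r
  have ccle: "j \<in> Zp p \<Longrightarrow> r < h j \<Longrightarrow> Suc (cc j r) \<le> ls j" for j r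
  proof -
    assume jr: "j \<in> Zp p" "r < h j"
    have "G j r \<le> ls j - h j" using G[OF jr(1)] jr(2) by blast
    thus ?thesis using hw[of j] jr(2) unfolding cc_def by linarith
  qed
  have ccinc: "j \<in> Zp p \<Longrightarrow> r < r' \<Longrightarrow> r' < h j \<Longrightarrow> cc j r < cc j r'" for j r r'
  proof -
    assume jr: "j \<in> Zp p" "r < r'" "r' < h j"
    have "G j r \<le> G j r'" using G[OF jr(1)] jr(2,3) by blast
    thus ?thesis using jr(2) unfolding cc_def by linarith
  qed
  define V where "V = Sigma (Zp p) (\<lambda>j. {..<h j})"
  have fV: "finite V" unfolding V_def by (simp add: finite_Zp)
  define n where "n = card V"
  obtain f where f: "bij_betw f {0..<n} V" using ex_bij_betw_nat_finite[OF fV] unfolding n_def by blast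
  have fk: "k < n \<Longrightarrow> fst (f k) \<in> Zp p \<and> snd (f k) < h (fst (f k))" for k
  proof -
    assume "k < n"
    hence "f k \<in> V" using bij_betwE[OF f] by auto
    thus ?thesis unfolding V_def by auto
  qed
  define blk where "blk k = nat (fst (f k))" for k
  define cv where "cv k = cc (fst (f k)) (snd (f k))" for k
  define Av where "Av k = (SOME S. S \<subseteq> T' (fst (f k)) \<and> card S = Suc (cv k))" for k
  have Av: "k < n \<Longrightarrow> Av k \<subseteq> T' (fst (f k)) \<and> card (Av k) = Suc (cv k)" for k
  proof -
    assume k: "k < n"
    have "Suc (cv k) \<le> card (T' (fst (f k)))" using ccle fk[OF k] cT' unfolding cv_def by auto
    then obtain S where "S \<subseteq> T' (fst (f k))" "card S = Suc (cv k)" by (rule obtain_subset_with_card_n)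
    hence "\<exists>S. S \<subseteq> T' (fst (f k)) \<and> card S = Suc (cv k)" by blast
    thus ?thesis unfolding Av_def by (rule someI_ex)
  qed
  have blkeq: "k < n \<Longrightarrow> k' < n \<Longrightarrow> blk k = blk k' \<longleftrightarrow> fst (f k) = fst (f k')" for k k'
    using fk[of k] fk[of k'] unfolding blk_def Zp_def by auto
  have finj: "inj_on f {0..<n}" using f by (simp add: bij_betw_def)
  have cdist: "cv i \<noteq> cv j" if "i < n" "j < n" "i \<noteq> j" "blk i = blk j" for i j
  proof -
    have "f i \<noteq> f j" using inj_onD[OF finj, of i j] that by auto
    moreover have "fst (f i) = fst (f j)" using blkeq[OF that(1,2)] that(4) by simp
    ultimately have "snd (f i) \<noteq> snd (f j)" by (simp add: prod_eq_iff)
    hence "snd (f i) < snd (f j) \<or> snd (f j) < snd (f i)" by auto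
    thus ?thesis unfolding cv_def using ccinc fk[OF that(1)] fk[OF that(2)] \<open>fst (f i) = fst (f j)\<close>
      by (metis less_irrefl)
  qed
  have sumV: "(\<Sum>k<n. F (f k)) = (\<Sum>w\<in>V. F w)" for F :: "int \<times> nat \<Rightarrow> real"
    using sum.reindex_bij_betw[OF f, of F] by (simp add: lessThan_atLeast0)
  have sumVZ: "(\<Sum>w\<in>V. F w) = (\<Sum>j\<in>Zp p. \<Sum>r<h j. F (j,r))" for F :: "int \<times> nat \<Rightarrow> real"
    unfolding V_def by (simp add: sum.Sigma finite_Zp)
  have d1: "real (deg n cv) = (\<Sum>j\<in>Zp p. real (h j) * (real (h j) - 1) / 2) + real (p - 1)"
  proof -
    have "real (deg n cv) = (\<Sum>k<n. real (cc (fst (f k)) (snd (f k))))" by (simp add: deg_def cv_def)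
    also have "\<dots> = (\<Sum>j\<in>Zp p. \<Sum>r<h j. real (cc j r))"
      using sumV[of "\<lambda>w. real (cc (fst w) (snd w))"] sumVZ[of "\<lambda>w. real (cc (fst w) (snd w))"] by simp
    also have "\<dots> = (\<Sum>j\<in>Zp p. real (h j) * (real (h j) - 1) / 2 + real (x j))"
    proof (rule sum.cong)
      fix j assume j: "j \<in> Zp p"
      have "(\<Sum>r<h j. real (cc j r)) = (\<Sum>r<h j. real r) + real (\<Sum>r<h j. G j r)"
        unfolding cc_def by (simp add: sum.distrib)
      also have "\<dots> = real (h j) * (real (h j) - 1) / 2 + real (x j)"
        using G[OF j] sum_lessThan_real by simp
      finally show "(\<Sum>r<h j. real (cc j r)) = real (h j) * (real (h j) - 1) / 2 + real (x j)" .
    qed simp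
    also have "\<dots> = (\<Sum>j\<in>Zp p. real (h j) * (real (h j) - 1) / 2) + real (p - 1)"
      using x(2) by (simp add: sum.distrib flip: of_nat_sum)
    finally show ?thesis .
  qed
  have Kbc: "card (Kb n blk k) = h (fst (f k))" if k: "k < n" for k
  proof -
    define j0 where "j0 = fst (f k)"
    have "Kb n blk k = {k' \<in> {0..<n}. fst (f k') = j0}"
      unfolding Kb_def j0_def using blkeq[OF _ k] by auto
    have "card (Kb n blk k) = card (f ` {k' \<in> {0..<n}. fst (f k') = j0})"
    proof -
      have "inj_on f {k' \<in> {0..<n}. fst (f k') = j0}" by (rule inj_on_subset[OF finj]) auto
      thus "card (Kb n blk k) = card (f ` {k' \<in> {0..<n}. fst (f k') = j0})"
        using \<open>Kb n blk k = _\<close> by (simp add: card_image)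
    qed
    also have "f ` {k' \<in> {0..<n}. fst (f k') = j0} = {w \<in> V. fst w = j0}"
      using f unfolding bij_betw_def by auto
    also have "{w \<in> V. fst w = j0} = {j0} \<times> {..<h j0}"
      unfolding V_def using fk[OF k] j0_def by auto
    finally show ?thesis unfolding j0_def by (simp add: card_cartesian_product)
  qed
  have d2: "real (card (Pairs n blk)) = (\<Sum>j\<in>Zp p. real (h j) * (real (h j) - 1) / 2)"
  proof -
    have "real (card (Pairs n blk)) = (\<Sum>k<n. (real (h (fst (f k))) - 1) / 2)"
      unfolding card_Pairs_alt by (rule sum.cong) (auto simp: Kbc)
    also have "\<dots> = (\<Sum>j\<in>Zp p. \<Sum>r<h j. (real (h j) - 1) / 2)"
      using sumV[of "\<lambda>w. (real (h (fst w)) - 1) / 2"] sumVZ[of "\<lambda>w. (real (h (fst w)) - 1) / 2"] by simp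
    also have "\<dots> = (\<Sum>j\<in>Zp p. real (h j) * (real (h j) - 1) / 2)" by simp
    finally show ?thesis .
  qed
  have degeq: "deg n cv = card (Pairs n blk) + (p - 1)"
  proof -
    have "real (deg n cv) = real (card (Pairs n blk) + (p - 1))" using d1 d2 by simp
    thus ?thesis by (simp only: of_nat_eq_iff)
  qed
  have AvZ: "k < n \<Longrightarrow> Av k \<subseteq> {0..<int p}" for k
  proof -
    assume "k < n"
    hence "Av k \<subseteq> T' (fst (f k))" using Av by blast
    also have "\<dots> \<subseteq> T (fst (f k))" by (rule T'T)
    also have "\<dots> \<subseteq> Zp p" by (rule TZ)
    finally show ?thesis unfolding Zp_def .
  qed
  have "p - 1 < card {(\<Sum>i<n. a i) mod int p | a. a \<in> PiE {..<n} Av \<and>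
                   (\<forall>i<n. \<forall>j<n. i \<noteq> j \<longrightarrow> blk i = blk j \<longrightarrow> a i \<noteq> a j)}"
    by (rule ANR[OF pr AvZ _ cdist degeq]) (use Av p1 in auto)
  moreover define Sums where "Sums = {(\<Sum>i<n. a i) mod int p | a. a \<in> PiE {..<n} Av \<and>
                   (\<forall>i<n. \<forall>j<n. i \<noteq> j \<longrightarrow> blk i = blk j \<longrightarrow> a i \<noteq> a j)}"
  ultimately have big: "p - 1 < card Sums" by simp
  have SS: "Sums \<subseteq> {0..<int p}" unfolding Sums_def using p1 by auto
  have Seq: "Sums = {0..<int p}"
  proof (rule card_subset_eq[OF _ SS])
    show "card Sums = card {0..<int p}" using big card_mono[OF _ SS] by fastforce
  qed simp
  define E2 where "E2 = K \<inter> I"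
  define tgt where "tgt = (- (\<Sum>i\<in>E2. e i)) mod int p"
  have "tgt \<in> Sums" unfolding Seq tgt_def using p1 by auto
  then obtain a where a: "a \<in> PiE {..<n} Av" "\<forall>i<n. \<forall>j<n. i \<noteq> j \<longrightarrow> blk i = blk j \<longrightarrow> a i \<noteq> a j"
     "(\<Sum>i<n. a i) mod int p = tgt" unfolding Sums_def by blast
  have aAv: "k < n \<Longrightarrow> a k \<in> T' (fst (f k))" for k using a(1) Av[of k] by auto
  define X1 where "X1 = (\<lambda>k. (fst (f k), a k)) ` {..<n}"
  define X2 where "X2 = (\<lambda>i. (i, e i)) ` E2"
  have inj1: "inj_on (\<lambda>k. (fst (f k), a k)) {..<n}"
  proof (rule inj_onI)
    fix k k' assume kk: "k \<in> {..<n}" "k' \<in> {..<n}" "(fst (f k), a k) = (fst (f k'), a k')"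
    hence "blk k = blk k'" using blkeq by auto
    thus "k = k'" using a(2) kk by auto
  qed
  have inj2: "inj_on (\<lambda>i. (i, e i)) E2" by (auto simp: inj_on_def)
  have disj: "X1 \<inter> X2 = {}"
  proof -
    have "(fst (f k), a k) \<noteq> (i, e i)" if "k < n" "i \<in> E2" for k i
    proof
      assume eq: "(fst (f k), a k) = (i, e i)"
      have "i \<in> I" using that E2_def by auto
      moreover have "a k \<in> T' i" using aAv[OF that(1)] eq by auto
      ultimately show False using eq unfolding T'_def by auto
    qed
    thus ?thesis unfolding X1_def X2_def by auto
  qed
  have fE2: "finite E2" unfolding E2_def using IZ finite_Zp finite_subset by blast
  have sumX: "(\<Sum>q\<in>X1 \<union> X2. F q) = (\<Sum>k<n. F (fst (f k), a k)) + (\<Sum>i\<in>E2. F (i, e i))" for F :: "int \<times> int \<Rightarrow> int"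
  proof -
    have "(\<Sum>q\<in>X1 \<union> X2. F q) = (\<Sum>q\<in>X1. F q) + (\<Sum>q\<in>X2. F q)"
      by (rule sum.union_disjoint) (use disj fE2 in \<open>auto simp: X1_def X2_def\<close>)
    thus ?thesis unfolding X1_def X2_def by (simp add: sum.reindex[OF inj1] sum.reindex[OF inj2])
  qed
  have sumVi: "(\<Sum>k<n. F (f k)) = (\<Sum>j\<in>Zp p. \<Sum>r<h j. F (j,r))" for F :: "int \<times> nat \<Rightarrow> int"
  proof -
    have "(\<Sum>k<n. F (f k)) = (\<Sum>w\<in>V. F w)"
      using sum.reindex_bij_betw[OF f, of F] by (simp add: lessThan_atLeast0)
    thus ?thesis unfolding V_def by (simp add: sum.Sigma finite_Zp)
  qed
  have h0: "\<exists>j\<in>Zp p. 0 < h j"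
  proof (rule ccontr)
    assume "\<not> (\<exists>j\<in>Zp p. 0 < h j)"
    hence "(\<Sum>j\<in>Zp p. cap j) = 0" unfolding cap_def by simp
    thus False using capsum p1 by simp
  qed
  have n0: "0 < n"
  proof -
    obtain j where "j \<in> Zp p" "0 < h j" using h0 by blast
    hence "(j, 0) \<in> V" unfolding V_def by auto
    thus ?thesis unfolding n_def using fV card_gt_0_iff by blast
  qed
  show ?thesis
  proof (rule zero_sum_from_X[OF pr vf, of "X1 \<union> X2"])
    show "X1 \<union> X2 \<subseteq> Zp p \<times> Zp p"
    proof -
      have "X1 \<subseteq> Zp p \<times> Zp p" unfolding X1_def using fk aAv T'T TZ by blast
      moreover have "X2 \<subseteq> Zp p \<times> Zp p" unfolding X2_def E2_def using IZ eT TZ by blast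
      ultimately show ?thesis by blast
    qed
    show "(\<lambda>x. pt p u v (fst x) (snd x)) ` (X1 \<union> X2) \<subseteq> A"
    proof -
      have "pt p u v j t \<in> A" if "t \<in> T j" for j t using that unfolding T_def Tset_def by auto
      moreover have "X1 \<union> X2 \<subseteq> {(j,t). t \<in> T j}"
        unfolding X1_def X2_def E2_def using aAv T'T eT by blast
      ultimately show ?thesis by auto
    qed
    show "X1 \<union> X2 \<noteq> {}" unfolding X1_def using n0 by auto
    show "(\<Sum>x\<in>X1 \<union> X2. snd x) mod int p = 0"
    proof -
      have "(\<Sum>x\<in>X1 \<union> X2. snd x) = (\<Sum>k<n. a k) + (\<Sum>i\<in>E2. e i)" using sumX[of snd] by simp
      hence "(\<Sum>x\<in>X1 \<union> X2. snd x) mod int p = ((\<Sum>k<n. a k) mod int p + (\<Sum>i\<in>E2. e i)) mod int p"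
        by (simp add: mod_add_left_eq)
      also have "\<dots> = 0" unfolding a(3) tgt_def by (simp add: mod_add_left_eq)
      finally show ?thesis .
    qed
    show "(\<Sum>x\<in>X1 \<union> X2. fst x) mod int p = 0"
    proof -
      have s1: "(\<Sum>k<n. fst (f k)) = (\<Sum>j\<in>Zp p. j * int (h j))"
        using sumVi[of fst] by (simp add: mult.commute)
      also have "\<dots> = base + (\<Sum>j\<in>K - I. j)"
      proof -
        have "(\<Sum>j\<in>Zp p. j * int (h j)) = base + (\<Sum>j\<in>Zp p. if j \<in> K - I then j else 0)"
          unfolding base_def h_def sum.distrib[symmetric] by (rule sum.cong) (auto simp: algebra_simps)
        also have "(\<Sum>j\<in>Zp p. if j \<in> K - I then j else 0) = (\<Sum>j\<in>K - I. j)"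
        proof -
          have "Zp p \<inter> {j. j \<in> K - I} = K - I" using KZ by auto
          thus ?thesis using finite_Zp by (simp add: sum.If_cases)
        qed
        finally show ?thesis .
      qed
      finally have s1': "(\<Sum>k<n. fst (f k)) = base + (\<Sum>j\<in>K - I. j)" .
      have fK: "finite K" using KZ finite_Zp finite_subset by blast
      have "(\<Sum>x\<in>X1 \<union> X2. fst x) = base + (\<Sum>j\<in>K - I. j) + (\<Sum>i\<in>E2. i)" using sumX[of fst] s1' by simp
      also have "\<dots> = base + \<Sum>K"
        unfolding E2_def using fK by (simp add: sum.Int_Diff[of K _ I] add.assoc add.commute)
      finally have "(\<Sum>x\<in>X1 \<union> X2. fst x) mod int p = (base + (\<Sum>K) mod int p) mod int p"
        by (simp add: mod_add_right_eq)
      also have "\<dots> = 0" unfolding K(2) by (simp add: mod_add_right_eq)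
      finally show ?thesis .
    qed
  qed
qed


definition om :: "nat \<Rightarrow> int \<Rightarrow> complex" where
  "om p x = cis (2 * pi * real_of_int x / real p)"

lemma om_add: "om p (x + y) = om p x * om p y"
  unfolding om_def cis_mult by (simp add: add_divide_distrib distrib_left)

lemma om_0: "om p 0 = 1" unfolding om_def by simp

lemma cis_2pi_int: "cis (2 * pi * real_of_int q) = 1"
  by (simp add: cis.ctr cos_int_2pin sin_int_2pin complex_eq_iff)

lemma om_mult_p: "0 < p \<Longrightarrow> om p (int p * q) = 1"
proof -
  assume p: "0 < p"
  have "2 * pi * real_of_int (int p * q) / real p = 2 * pi * real_of_int q" using p by (simp add: field_simps)
  thus ?thesis unfolding om_def using cis_2pi_int by simp
qed

lemma om_mod: "0 < p \<Longrightarrow> om p x = om p (x mod int p)"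
proof -
  assume p: "0 < p"
  have "x = x mod int p + int p * (x div int p)" by simp
  hence "om p x = om p (x mod int p) * om p (int p * (x div int p))" by (metis om_add)
  thus ?thesis using om_mult_p[OF p] by simp
qed

lemma om_sum: "(\<Prod>a\<in>B. om p (g a)) = om p (\<Sum>a\<in>B. g a)"
proof (induction B rule: infinite_finite_induct)
  case (infinite A) thus ?case by (simp add: om_0)
next
  case empty thus ?case by (simp add: om_0)
next
  case (insert x F) thus ?case by (simp add: om_add)
qed

lemma om_pow: "om p (int m * s) = om p s ^ m"
  by (induction m) (auto simp: om_0 distrib_right om_add)

lemma om_one_iff:
  assumes p: "0 < p"
  shows "om p s = 1 \<longleftrightarrow> int p dvd s"
proof
  assume "int p dvd s"
  then obtain q where "s = int p * q" by (auto simp: dvd_def)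
  thus "om p s = 1" using om_mult_p[OF p] by simp
next
  assume "om p s = 1"
  hence "Re (cis (2 * pi * real_of_int s / real p)) = 1" unfolding om_def by simp
  hence "cos (2 * pi * real_of_int s / real p) = 1" by simp
  then obtain q where q: "2 * pi * real_of_int s / real p = real_of_int q * 2 * pi"
    unfolding cos_one_2pi_int by blast
  hence "real_of_int s = real_of_int q * real p" using p by (simp add: field_simps)
  hence "s = q * int p" by (metis of_int_eq_iff of_int_mult of_int_of_nat_eq)
  thus "int p dvd s" by simp
qed

lemma Zp_image: "Zp p = int ` {..<p}"
  unfolding Zp_def lessThan_atLeast0 image_int_atLeastLessThan by simp

lemma geo_sum:
  assumes p: "0 < p"
  shows "(\<Sum>k\<in>Zp p. om p (k * s)) = (if int p dvd s then of_nat p else 0)"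
proof -
  have "(\<Sum>k\<in>Zp p. om p (k * s)) = (\<Sum>m<p. om p s ^ m)"
    unfolding Zp_image by (simp add: sum.reindex om_pow)
  also have "\<dots> = (if int p dvd s then of_nat p else 0)"
  proof (cases "int p dvd s")
    case True
    hence "om p s = 1" using om_one_iff[OF p] by simp
    thus ?thesis using True by simp
  next
    case False
    hence ne: "om p s \<noteq> 1" using om_one_iff[OF p] by simp
    have "om p s ^ p = 1" using om_pow[of p p s] om_mult_p[OF p, of s] by simp
    thus ?thesis using False geometric_sum[OF ne, of p] by simp
  qed
  finally show ?thesis .
qed

lemma cmod_1_cis: "cmod (1 + cis t) = 2 * \<bar>cos (t / 2)\<bar>"
proof -
  define c where "c = cos (t/2)"
  define s where "s = sin (t/2)"
  have ct: "cos t = c^2 - s^2" unfolding c_def s_def using cos_double[of "t/2"] by simp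
  have st: "sin t = 2 * s * c" unfolding c_def s_def using sin_double[of "t/2"] by simp
  have cs: "s^2 = 1 - c^2" unfolding c_def s_def using sin_cos_squared_add[of "t/2"] by linarith
  have "1 + cis t = Complex (1 + cos t) (sin t)" by (simp add: complex_eq_iff)
  hence "cmod (1 + cis t) = sqrt ((1 + cos t)^2 + (sin t)^2)" by (simp add: complex_norm)
  also have "(1 + cos t)^2 + (sin t)^2 = (2 * c)^2"
  proof -
    have a: "(1 + cos t)^2 = 1 + 2 * cos t + (cos t)^2" by (simp add: power2_eq_square algebra_simps)
    have b: "cos t = 2 * c^2 - 1" unfolding c_def using cos_double_cos[of "t/2"] by simp
    have "(1 + cos t)^2 + (sin t)^2 = 2 + 2 * cos t" using a sin_cos_squared_add[of t] by linarith
    also have "\<dots> = (2 * c)^2" unfolding b by (simp add: power2_eq_square)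
    finally show ?thesis .
  qed
  also have "sqrt ((2 * c)^2) = 2 * \<bar>c\<bar>" by (simp only: real_sqrt_abs abs_mult)
  finally show ?thesis unfolding c_def .
qed

lemma cmod_1_om:
  assumes p: "0 < p"
  shows "cmod (1 + om p x) = 2 * \<bar>cos (real_of_int (x mod int p) * pi / real p)\<bar>"
proof -
  have "cmod (1 + om p x) = cmod (1 + cis (2 * pi * real_of_int (x mod int p) / real p))"
    using om_mod[OF p, of x] unfolding om_def by simp
  also have "\<dots> = 2 * \<bar>cos (real_of_int (x mod int p) * pi / real p)\<bar>"
    unfolding cmod_1_cis by (simp add: field_simps)
  finally show ?thesis .
qed


lemma inv_mod:
  assumes pr: "prime p" and x: "x \<in> Zp p" "x \<noteq> 0"
  shows "\<exists>y\<in>Zp p. (x * y) mod int p = 1"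
proof -
  have p1: "1 < p" using pr prime_gt_1_nat by blast
  have "\<not> int p dvd x" using x unfolding Zp_def by (auto dest: zdvd_imp_le)
  hence "coprime (int p) x" using pr by (simp add: prime_imp_coprime prime_nat_int_transfer)
  hence g: "gcd x (int p) = 1" by (simp add: coprime_iff_gcd_eq_1 gcd.commute)
  obtain a b where ab: "a * x + b * int p = gcd x (int p)" using bezout_int by blast
  hence "a * x + b * int p = 1" using g by simp
  hence "(x * (a mod int p)) mod int p = 1"
  proof -
    assume e: "a * x + b * int p = 1"
    have "(x * (a mod int p)) mod int p = (a * x + b * int p) mod int p"
      by (simp add: mod_simps algebra_simps)
    thus ?thesis using e p1 by simp
  qed
  moreover have "a mod int p \<in> Zp p" unfolding Zp_def using p1 by simp
  ultimately show ?thesis by blast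
qed

lemma mm1: "(a * (b mod n) + c) mod n = (a * b + c) mod (n::int)" by (metis mod_add_left_eq mod_mult_right_eq)
lemma mm2: "(c + a * (b mod n)) mod n = (c + a * b) mod (n::int)" by (metis mod_add_right_eq mod_mult_right_eq)
lemma mm3: "((b mod n) * a + c) mod n = (b * a + c) mod (n::int)" by (metis mod_add_left_eq mod_mult_left_eq)
lemma mm4: "(c + (b mod n) * a) mod n = (c + b * a) mod (n::int)" by (metis mod_add_right_eq mod_mult_left_eq)
lemma mm5: "(c - (b mod n) * a) mod n = (c - b * a) mod (n::int)" by (metis mod_diff_right_eq mod_mult_left_eq)
lemma mm6: "(c - a * (b mod n)) mod n = (c - a * b) mod (n::int)" by (metis mod_diff_right_eq mod_mult_right_eq)
lemma mm7: "((b mod n) * a - c) mod n = (b * a - c) mod (n::int)" by (metis mod_diff_left_eq mod_mult_left_eq)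
lemma mm8: "(a * (b mod n) - c) mod n = (a * b - c) mod (n::int)" by (metis mod_diff_left_eq mod_mult_right_eq)
lemma mm9: "(- ((b mod n) * a)) mod n = (- (b * a)) mod (n::int)" by (metis mod_minus_eq mod_mult_left_eq)
lemma mm10: "(- (a * (b mod n))) mod n = (- (a * b)) mod (n::int)" by (metis mod_minus_eq mod_mult_right_eq)
lemmas mms = mm9 mm10 mm1 mm2 mm3 mm4 mm5 mm6 mm7 mm8 distrib_left mod_simps

lemma Zp_mod_eq: "y \<in> Zp p \<Longrightarrow> x mod int p = y mod int p \<Longrightarrow> x mod int p = y"
  unfolding Zp_def by simp

lemma frame_of_k:
  assumes pr: "prime p" and k: "k \<in> Zp2 p" "k \<noteq> (0,0)"
  shows "\<exists>u v. valid_frame p u v \<and> (\<forall>a\<in>Zp2 p. \<forall>j\<in>Zp p.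
            (\<exists>t\<in>Zp p. a = pt p u v j t) \<longleftrightarrow> (fst k * fst a + snd k * snd a) mod int p = j)"
proof -
  have p1: "1 < p" using pr prime_gt_1_nat by blast
  obtain k1 k2 where kk: "k = (k1, k2)" by (cases k) auto
  have k12: "k1 \<in> Zp p" "k2 \<in> Zp p" using k(1) kk unfolding Zp2_def by auto
  have modZ: "x mod int p \<in> Zp p" for x unfolding Zp_def using p1 by simp
  have mod1: "(x * y) mod int p = 1 \<Longrightarrow> (z * (x * y)) mod int p = z mod int p" for x y z
    by (metis mod_mult_right_eq mult.right_neutral)
  show ?thesis
  proof (cases "k1 = 0")
    case False
    obtain y where y: "y \<in> Zp p" "(k1 * y) mod int p = 1" using inv_mod[OF pr k12(1) False] by blast
    define u where "u = ((- k2) mod int p, k1)"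
    define v where "v = (y, 0::int)"
    have vf: "valid_frame p u v"
      unfolding valid_frame_def u_def v_def Zp2_def
    proof (intro conjI)
      show "((- k2) mod int p, k1) \<in> Zp p \<times> Zp p" using modZ k12 by auto
      show "(y, 0) \<in> Zp p \<times> Zp p" using y p1 unfolding Zp_def by auto
      have "(fst ((- k2) mod int p, k1) * snd (y, 0::int) - snd ((- k2) mod int p, k1) * fst (y, 0::int)) mod int p
            = (- (k1 * y)) mod int p" by simp
      also have "\<dots> = (- ((k1 * y) mod int p)) mod int p" by (simp add: mms)
      also have "\<dots> = int p - 1" using y(2) p1 by (simp add: zmod_zminus1_eq_if)
      finally show "(fst ((- k2) mod int p, k1) * snd (y, 0::int) - snd ((- k2) mod int p, k1) * fst (y, 0::int)) mod int p \<noteq> 0"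
        using p1 by simp
    qed
    have fib: "(\<exists>t\<in>Zp p. a = pt p u v j t) \<longleftrightarrow> (k1 * fst a + k2 * snd a) mod int p = j"
      if a: "a \<in> Zp2 p" and j: "j \<in> Zp p" for a j
    proof
      assume "\<exists>t\<in>Zp p. a = pt p u v j t"
      then obtain t where t: "a = pt p u v j t" by blast
      have "(k1 * fst a + k2 * snd a) mod int p = (k1 * (j * y + t * (- k2)) + k2 * (t * k1)) mod int p"
        unfolding t pt_def u_def v_def by (simp add: mms)
      also have "k1 * (j * y + t * (- k2)) + k2 * (t * k1) = j * (k1 * y)" by (simp add: algebra_simps)
      also have "(j * (k1 * y)) mod int p = j mod int p" using mod1[OF y(2)] by simp
      also have "\<dots> = j" using j unfolding Zp_def by simp
      finally show "(k1 * fst a + k2 * snd a) mod int p = j" .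
    next
      assume e: "(k1 * fst a + k2 * snd a) mod int p = j"
      obtain a1 a2 where aa: "a = (a1, a2)" by (cases a) auto
      have a12: "a1 \<in> Zp p" "a2 \<in> Zp p" using a aa unfolding Zp2_def by auto
      define t where "t = (a2 * y) mod int p"
      have "a = pt p u v j t"
      proof -
        have "(j * y + t * ((- k2) mod int p)) mod int p = ((k1 * a1 + k2 * a2) * y + (a2 * y) * (- k2)) mod int p"
          unfolding e[symmetric] aa t_def by (simp add: mms)
        also have "(k1 * a1 + k2 * a2) * y + (a2 * y) * (- k2) = a1 * (k1 * y)" by (simp add: algebra_simps)
        also have "(a1 * (k1 * y)) mod int p = a1" using mod1[OF y(2)] a12 unfolding Zp_def by simp
        finally have f1: "(j * y + t * ((- k2) mod int p)) mod int p = a1" .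
        have "(j * 0 + t * k1) mod int p = (a2 * (k1 * y)) mod int p" unfolding t_def by (simp add: mms mult_ac)
        also have "\<dots> = a2" using mod1[OF y(2)] a12 unfolding Zp_def by simp
        finally have f2: "(j * 0 + t * k1) mod int p = a2" .
        show ?thesis unfolding pt_def u_def v_def aa using f1 f2 by simp
      qed
      moreover have "t \<in> Zp p" unfolding t_def by (rule modZ)
      ultimately show "\<exists>t\<in>Zp p. a = pt p u v j t" by blast
    qed
    show ?thesis
    proof (intro exI conjI)
      show "valid_frame p u v" by (rule vf)
      show "\<forall>a\<in>Zp2 p. \<forall>j\<in>Zp p. (\<exists>t\<in>Zp p. a = pt p u v j t) \<longleftrightarrow> (fst k * fst a + snd k * snd a) mod int p = j"
        using fib kk by simp
    qed
  next
    case True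
    hence k2n: "k2 \<noteq> 0" using k(2) kk by auto
    obtain y where y: "y \<in> Zp p" "(k2 * y) mod int p = 1" using inv_mod[OF pr k12(2) k2n] by blast
    define u where "u = ((- k2) mod int p, 0::int)"
    define v where "v = (0::int, y)"
    have vf: "valid_frame p u v"
      unfolding valid_frame_def u_def v_def Zp2_def
    proof (intro conjI)
      show "((- k2) mod int p, 0::int) \<in> Zp p \<times> Zp p" using modZ p1 unfolding Zp_def by auto
      show "(0::int, y) \<in> Zp p \<times> Zp p" using y p1 unfolding Zp_def by auto
      have "(fst ((- k2) mod int p, 0::int) * snd (0::int, y) - snd ((- k2) mod int p, 0::int) * fst (0::int, y)) mod int p
            = (- (k2 * y)) mod int p" by (simp add: mms)
      also have "\<dots> = (- ((k2 * y) mod int p)) mod int p" by (simp add: mms)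
      also have "\<dots> = int p - 1" using y(2) p1 by (simp add: zmod_zminus1_eq_if)
      finally show "(fst ((- k2) mod int p, 0::int) * snd (0::int, y) - snd ((- k2) mod int p, 0::int) * fst (0::int, y)) mod int p \<noteq> 0"
        using p1 by simp
    qed
    have fib: "(\<exists>t\<in>Zp p. a = pt p u v j t) \<longleftrightarrow> (k1 * fst a + k2 * snd a) mod int p = j"
      if a: "a \<in> Zp2 p" and j: "j \<in> Zp p" for a j
    proof
      assume "\<exists>t\<in>Zp p. a = pt p u v j t"
      then obtain t where t: "a = pt p u v j t" by blast
      have "(k1 * fst a + k2 * snd a) mod int p = (k2 * (j * y)) mod int p"
        unfolding t pt_def u_def v_def using True by (simp add: mms)
      also have "k2 * (j * y) = j * (k2 * y)" by (simp add: algebra_simps)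
      also have "(j * (k2 * y)) mod int p = j mod int p" using mod1[OF y(2)] by simp
      also have "\<dots> = j" using j unfolding Zp_def by simp
      finally show "(k1 * fst a + k2 * snd a) mod int p = j" .
    next
      assume e: "(k1 * fst a + k2 * snd a) mod int p = j"
      obtain a1 a2 where aa: "a = (a1, a2)" by (cases a) auto
      have a12: "a1 \<in> Zp p" "a2 \<in> Zp p" using a aa unfolding Zp2_def by auto
      define t where "t = (- (a1 * y)) mod int p"
      have "a = pt p u v j t"
      proof -
        have "(j * 0 + t * ((- k2) mod int p)) mod int p = ((- (a1 * y)) * (- k2)) mod int p"
          unfolding t_def by (simp add: mod_mult_eq)
        also have "(- (a1 * y)) * (- k2) = a1 * (k2 * y)" by simp
        also have "(a1 * (k2 * y)) mod int p = a1" using mod1[OF y(2)] a12 unfolding Zp_def by simp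
        finally have f1: "(j * 0 + t * ((- k2) mod int p)) mod int p = a1" .
        have "(j * y + t * 0) mod int p = ((k2 * a2) * y) mod int p"
          unfolding e[symmetric] aa using True by (simp add: mms)
        also have "(k2 * a2) * y = a2 * (k2 * y)" by (simp add: algebra_simps)
        also have "(a2 * (k2 * y)) mod int p = a2" using mod1[OF y(2)] a12 unfolding Zp_def by simp
        finally have f2: "(j * y + t * 0) mod int p = a2" .
        show ?thesis unfolding pt_def u_def v_def aa using f1 f2 by simp
      qed
      moreover have "t \<in> Zp p" unfolding t_def by (rule modZ)
      ultimately show "\<exists>t\<in>Zp p. a = pt p u v j t" by blast
    qed
    show ?thesis
    proof (intro exI conjI)
      show "valid_frame p u v" by (rule vf)
      show "\<forall>a\<in>Zp2 p. \<forall>j\<in>Zp p. (\<exists>t\<in>Zp p. a = pt p u v j t) \<longleftrightarrow> (fst k * fst a + snd k * snd a) mod int p = j"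
        using fib kk by simp
    qed
  qed
qed


lemma count_identity:
  assumes p: "0 < p" and fA: "finite A"
  shows "of_nat (p^2 * card {B. B \<subseteq> A \<and> (\<Sum>b\<in>B. fst b) mod int p = 0 \<and> (\<Sum>b\<in>B. snd b) mod int p = 0}) =
         (\<Sum>k\<in>Zp2 p. \<Prod>a\<in>A. (1 + om p (fst k * fst a + snd k * snd a)))"
proof -
  define S1 where "S1 B = (\<Sum>b\<in>B. fst b)" for B :: "(int \<times> int) set"
  define S2 where "S2 B = (\<Sum>b\<in>B. snd b)" for B :: "(int \<times> int) set"
  have pa: "(\<Prod>a\<in>A. 1 + om p (fst k * fst a + snd k * snd a)) = (\<Sum>B\<in>Pow A. om p (fst k * S1 B + snd k * S2 B))" for k
  proof -
    have "(\<Prod>a\<in>A. 1 + om p (fst k * fst a + snd k * snd a)) = (\<Prod>a\<in>A. om p (fst k * fst a + snd k * snd a) + 1)"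
      by (simp add: add.commute)
    also have "\<dots> = (\<Sum>B\<in>Pow A. (\<Prod>a\<in>B. om p (fst k * fst a + snd k * snd a)) * (\<Prod>a\<in>A - B. 1))"
      by (rule prod_add[OF fA])
    also have "\<dots> = (\<Sum>B\<in>Pow A. om p (fst k * S1 B + snd k * S2 B))"
      by (simp add: om_sum S1_def S2_def sum_distrib_left sum.distrib)
    finally show ?thesis .
  qed
  have inner: "(\<Sum>k\<in>Zp2 p. om p (fst k * x + snd k * y)) =
      (if int p dvd x then of_nat p else 0) * (if int p dvd y then of_nat p else 0)" for x y
  proof -
    have "(\<Sum>k\<in>Zp2 p. om p (fst k * x + snd k * y)) = (\<Sum>(k1,k2)\<in>Zp p \<times> Zp p. om p (k1 * x) * om p (k2 * y))"
      unfolding Zp2_def by (simp add: om_add split_def)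
    also have "\<dots> = (\<Sum>k1\<in>Zp p. \<Sum>k2\<in>Zp p. om p (k1 * x) * om p (k2 * y))"
      by (rule sum.cartesian_product[symmetric])
    also have "\<dots> = (\<Sum>k1\<in>Zp p. om p (k1 * x)) * (\<Sum>k2\<in>Zp p. om p (k2 * y))" by (simp add: sum_product)
    also have "\<dots> = (if int p dvd x then of_nat p else 0) * (if int p dvd y then of_nat p else 0)"
      by (simp add: geo_sum[OF p])
    finally show ?thesis .
  qed
  have "(\<Sum>k\<in>Zp2 p. \<Prod>a\<in>A. (1 + om p (fst k * fst a + snd k * snd a))) =
        (\<Sum>k\<in>Zp2 p. \<Sum>B\<in>Pow A. om p (fst k * S1 B + snd k * S2 B))" by (simp add: pa)
  also have "\<dots> = (\<Sum>B\<in>Pow A. \<Sum>k\<in>Zp2 p. om p (fst k * S1 B + snd k * S2 B))" by (rule sum.swap)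
  also have "\<dots> = (\<Sum>B\<in>Pow A. if int p dvd S1 B \<and> int p dvd S2 B then of_nat (p^2) else 0)"
    by (rule sum.cong) (auto simp: inner power2_eq_square)
  also have "\<dots> = of_nat (p^2) * of_nat (card {B \<in> Pow A. int p dvd S1 B \<and> int p dvd S2 B})"
    using fA by (simp add: sum.If_cases Int_def)
  also have "{B \<in> Pow A. int p dvd S1 B \<and> int p dvd S2 B} =
             {B. B \<subseteq> A \<and> (\<Sum>b\<in>B. fst b) mod int p = 0 \<and> (\<Sum>b\<in>B. snd b) mod int p = 0}"
    by (auto simp: dvd_eq_mod_eq_0 S1_def S2_def)
  finally show ?thesis by simp
qed

lemma pow4_lt_2pow: "17 \<le> n \<Longrightarrow> n ^ 4 < (2::nat) ^ n"
proof (induction n rule: dec_induct)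
  case base
  then show ?case by simp
next
  case (step n)
  have n17: "17 \<le> n" using step(1) .
  have e: "(Suc n)^4 = n^4 + 4*n^3 + 6*n^2 + 4*n + 1" by (simp add: power_def algebra_simps eval_nat_numeral)
  have n3: "n^3 = n * n^2" and n4: "n^4 = n * n^3" and n2: "n^2 = n * n" by (simp_all add: power_def eval_nat_numeral)
  have a: "6 * n^2 \<le> n^3" unfolding n3 using n17 by (intro mult_right_mono) auto
  have b0: "4 \<le> n^2" unfolding n2 using n17 mult_le_mono[of 17 n 17 n] by simp
  have b: "4 * n \<le> n^3" unfolding n3 using b0 by (simp add: mult.commute mult_right_mono)
  have c: "1 \<le> n^3" using n17 by simp
  have d: "7 * n^3 \<le> n^4" unfolding n4 using n17 by (intro mult_right_mono) auto
  have "(Suc n)^4 \<le> 2 * n^4" using e a b c d by linarith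
  thus ?case using step by simp
qed

lemma case2:
  fixes p :: nat and A :: "(int \<times> int) set"
  assumes pr: "prime p" and p17: "17 \<le> p" and AZ: "A \<subseteq> Zp2 p" and cA: "p \<le> card A"
    and H: "\<forall>u v. valid_frame p u v \<longrightarrow>
           (\<Prod>j \<in> Zp p. \<bar>cos (real_of_int j * pi / real p)\<bar> ^ lam p A u v j) \<le> 1 / (real p)^2"
  shows "\<exists>B\<subseteq>A. B \<noteq> {} \<and> (\<Sum>b\<in>B. fst b) mod int p = 0 \<and> (\<Sum>b\<in>B. snd b) mod int p = 0"
proof -
  have p0: "0 < p" using p17 by simp
  have fZ2: "finite (Zp2 p)" unfolding Zp2_def by (simp add: finite_Zp)
  have fA: "finite A" using AZ fZ2 finite_subset by blast
  define n where "n = card A"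
  define Zs where "Zs = {B. B \<subseteq> A \<and> (\<Sum>b\<in>B. fst b) mod int p = 0 \<and> (\<Sum>b\<in>B. snd b) mod int p = 0}"
  define P where "P k = (\<Prod>a\<in>A. 1 + om p (fst k * fst a + snd k * snd a))" for k
  have CI: "complex_of_nat (p^2 * card Zs) = (\<Sum>k\<in>Zp2 p. P k)"
    unfolding Zs_def P_def by (rule count_identity[OF p0 fA])
  have P0: "P (0,0) = 2 ^ n" unfolding P_def n_def by (simp add: om_0)
  have Pk: "cmod (P k) \<le> 2 ^ n / (real p)^2" if k: "k \<in> Zp2 p - {(0,0)}" for k
  proof -
    obtain u v where vf: "valid_frame p u v" and fib: "\<forall>a\<in>Zp2 p. \<forall>j\<in>Zp p.
            (\<exists>t\<in>Zp p. a = pt p u v j t) \<longleftrightarrow> (fst k * fst a + snd k * snd a) mod int p = j"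
      using frame_of_k[OF pr] k by blast
    define g where "g a = (fst k * fst a + snd k * snd a) mod int p" for a
    have gZ: "g ` A \<subseteq> Zp p" unfolding g_def Zp_def using p0 by auto
    have "cmod (P k) = (\<Prod>a\<in>A. cmod (1 + om p (fst k * fst a + snd k * snd a)))"
      unfolding P_def by (simp add: prod_norm)
    also have "\<dots> = (\<Prod>a\<in>A. 2 * \<bar>cos (real_of_int (g a) * pi / real p)\<bar>)"
      unfolding g_def by (rule prod.cong) (simp_all add: cmod_1_om[OF p0])
    also have "\<dots> = 2 ^ n * (\<Prod>a\<in>A. \<bar>cos (real_of_int (g a) * pi / real p)\<bar>)"
      by (simp add: prod.distrib n_def)
    also have "(\<Prod>a\<in>A. \<bar>cos (real_of_int (g a) * pi / real p)\<bar>) =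
               (\<Prod>j\<in>Zp p. \<Prod>a\<in>{a \<in> A. g a = j}. \<bar>cos (real_of_int (g a) * pi / real p)\<bar>)"
      by (rule prod.group[symmetric, OF fA finite_Zp gZ])
    also have "\<dots> = (\<Prod>j\<in>Zp p. \<bar>cos (real_of_int j * pi / real p)\<bar> ^ lam p A u v j)"
    proof (rule prod.cong)
      fix j assume j: "j \<in> Zp p"
      have eqv: "(\<exists>t\<in>Zp p. a = pt p u v j t) \<longleftrightarrow> g a = j" if "a \<in> A" for a
      proof -
        have "a \<in> Zp2 p" using that AZ by blast
        thus ?thesis using fib j unfolding g_def by blast
      qed
      have "{a \<in> A. g a = j} = {a \<in> A. \<exists>t\<in>Zp p. a = pt p u v j t}"
        using eqv by auto
      hence "card {a \<in> A. g a = j} = lam p A u v j" by (simp add: lam_pt)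
      moreover have "(\<Prod>a\<in>{a \<in> A. g a = j}. \<bar>cos (real_of_int (g a) * pi / real p)\<bar>) =
                     (\<Prod>a\<in>{a \<in> A. g a = j}. \<bar>cos (real_of_int j * pi / real p)\<bar>)"
        by (rule prod.cong) auto
      ultimately show "(\<Prod>a\<in>{a \<in> A. g a = j}. \<bar>cos (real_of_int (g a) * pi / real p)\<bar>) =
                     \<bar>cos (real_of_int j * pi / real p)\<bar> ^ lam p A u v j" by simp
    qed simp
    also have "2 ^ n * (\<Prod>j\<in>Zp p. \<bar>cos (real_of_int j * pi / real p)\<bar> ^ lam p A u v j) \<le> 2 ^ n * (1 / (real p)^2)"
      using H[rule_format, OF vf] by (intro mult_left_mono) auto
    finally show ?thesis by simp
  qed
  have z0: "(0::int, 0::int) \<in> Zp2 p" unfolding Zp2_def Zp_def using p0 by auto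
  have cZ: "card (Zp2 p - {(0,0)}) = p^2 - 1"
  proof -
    have "card (Zp2 p) = p^2" unfolding Zp2_def Zp_def by (simp add: card_cartesian_product power2_eq_square)
    thus ?thesis using z0 fZ2 by simp
  qed
  have "real (p^2 * card Zs) = Re (\<Sum>k\<in>Zp2 p. P k)" using arg_cong[OF CI, of Re] by simp
  also have "\<dots> = Re (P (0,0)) + (\<Sum>k\<in>Zp2 p - {(0,0)}. Re (P k))"
    unfolding Re_sum using fZ2 z0 by (simp add: sum.remove)
  also have "\<dots> \<ge> 2 ^ n - (\<Sum>k\<in>Zp2 p - {(0,0)}. 2 ^ n / (real p)^2)"
  proof -
    have "(\<Sum>k\<in>Zp2 p - {(0,0)}. - (2 ^ n / (real p)^2)) \<le> (\<Sum>k\<in>Zp2 p - {(0,0)}. Re (P k))"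
    proof (rule sum_mono)
      fix k assume "k \<in> Zp2 p - {(0,0)}"
      thus "- (2 ^ n / (real p)^2) \<le> Re (P k)" using Pk[of k] abs_Re_le_cmod[of "P k"] by linarith
    qed
    thus ?thesis unfolding P0 by (simp add: sum_negf)
  qed
  finally have ineq: "2 ^ n - real (p^2 - 1) * (2 ^ n / (real p)^2) \<le> real (p^2 * card Zs)"
    using cZ by simp
  have pp: "real (p^2 - 1) = (real p)^2 - 1" using p0 by (simp add: of_nat_diff)
  have "2 ^ n - real (p^2 - 1) * (2 ^ n / (real p)^2) = 2 ^ n / (real p)^2"
    unfolding pp using p0 by (simp add: field_simps)
  hence ineq2: "2 ^ n \<le> (real p)^2 * ((real p)^2 * real (card Zs))" using ineq p0 by (simp add: field_simps)
  have "card Zs \<ge> 2"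
  proof (rule ccontr)
    assume "\<not> card Zs \<ge> 2"
    hence "real (card Zs) \<le> 1" by simp
    hence "(real p)^2 * ((real p)^2 * real (card Zs)) \<le> (real p)^2 * ((real p)^2 * 1)"
      by (intro mult_left_mono) auto
    moreover have "(real p)^2 * ((real p)^2 * 1) = (real p)^4" by (simp add: power4_eq_xxxx power2_eq_square)
    ultimately have "(2::real) ^ n \<le> (real p)^4" using ineq2 by linarith
    hence "real ((2::nat) ^ n) \<le> real (p ^ 4)" by simp
    hence r1: "(2::nat) ^ n \<le> p ^ 4" by (simp only: of_nat_le_iff)
    have r2: "(2::nat) ^ p \<le> 2 ^ n" using cA n_def by (simp add: power_increasing)
    have r3: "p ^ 4 < (2::nat) ^ p" by (rule pow4_lt_2pow[OF p17])
    from r1 r2 r3 show False by linarith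
  qed
  have "\<exists>B\<in>Zs. B \<noteq> {}"
  proof (rule ccontr)
    assume "\<not> (\<exists>B\<in>Zs. B \<noteq> {})"
    hence "Zs \<subseteq> {{}}" by auto
    hence "card Zs \<le> 1" using card_mono[of "{{}}" Zs] by simp
    with \<open>card Zs \<ge> 2\<close> show False by simp
  qed
  then obtain B where "B \<in> Zs" "B \<noteq> {}" by blast
  thus ?thesis unfolding Zs_def by (intro exI[of _ B]) auto
qed


theorem lemma7:
  fixes p :: nat and A :: "(int \<times> int) set"
  assumes "prime p" and "p > 800"
    and "A \<subseteq> Zp2 p" and "card A = p + Ol p"
    and "(\<exists>u v. valid_frame p u v \<and>
           (let lm = lam p A u v; J = {j \<in> Zp p. odd (lm j)} in
            \<exists>I \<subseteq> Zp p. (\<forall>i \<in> I. lm i \<ge> 1) \<and> subset_sums p (I \<union> J) = Zp p \<and>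
              (\<Sum>i \<in> Zp p. let ls = (if i \<in> I then lm i - 1 else lm i) in
                   (ls div 2) * ((ls + 1) div 2)) \<ge> p - 1))
       \<or> (\<forall>u v. valid_frame p u v \<longrightarrow>
           (\<Prod>j \<in> Zp p. \<bar>cos (real_of_int j * pi / real p)\<bar> ^ lam p A u v j) \<le> 1 / (real p)^2)"
  shows "\<exists>B \<subseteq> A. B \<noteq> {} \<and> (\<Sum>b\<in>B. fst b) mod int p = 0 \<and> (\<Sum>b\<in>B. snd b) mod int p = 0"
  using assms(5)
proof
  assume "\<exists>u v. valid_frame p u v \<and>
           (let lm = lam p A u v; J = {j \<in> Zp p. odd (lm j)} in
            \<exists>I \<subseteq> Zp p. (\<forall>i \<in> I. lm i \<ge> 1) \<and> subset_sums p (I \<union> J) = Zp p \<and>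
              (\<Sum>i \<in> Zp p. let ls = (if i \<in> I then lm i - 1 else lm i) in
                   (ls div 2) * ((ls + 1) div 2)) \<ge> p - 1)"
  then obtain u v I where vf: "valid_frame p u v" and I: "I \<subseteq> Zp p" "\<forall>i\<in>I. lam p A u v i \<ge> 1"
    "subset_sums p (I \<union> {j \<in> Zp p. odd (lam p A u v j)}) = Zp p"
    "(\<Sum>i \<in> Zp p. let ls = (if i \<in> I then lam p A u v i - 1 else lam p A u v i) in
                   (ls div 2) * ((ls + 1) div 2)) \<ge> p - 1"
    unfolding Let_def by blast
  show ?thesis by (rule case1[OF assms(1) vf I])
next
  assume H: "\<forall>u v. valid_frame p u v \<longrightarrow>
           (\<Prod>j \<in> Zp p. \<bar>cos (real_of_int j * pi / real p)\<bar> ^ lam p A u v j) \<le> 1 / (real p)^2"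
  show ?thesis by (rule case2[OF assms(1) _ assms(3) _ H]) (use assms(2,4) in auto)
qed


end
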